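(* Let $\mathcal H$ be a complex Hilbert space, $T\in\mathcal B(\mathcal H)$ left-invertible with Cauchy dual $T'=T(T^*T)^{-1}$, and $C_k=T'^{*k}T'^k$ for $k\in\mathbb Z_+$. Let $\mathcal H'_u=\bigcap_{n\ge0}\mathcal R(T'^n)$ and $P=P_{\mathcal H'_u}$. Then the sequences $\{T'^{k+1}C_k^{-1}T'^{*(k+1)}\}_{k\ge0}$ and $\{T'^kC_k^{-1}C_{k+1}C_k^{-1}T'^{*k}\}_{k\ge0}$ converge in the strong operator topology to positive operators $A$ and $B$ respectively, with $A=PT'PT'^*P$ and $B=P(T^*T)^{-1}P$, and the following are equivalent: (i) $T'|_{\mathcal H'_u}$ is hyponormal; (ii) $A\le B$; (iii) for all $h\in\mathcal H$, $\lim_{k\to\infty}\|(C_k^{1/2}T'C_k^{-1/2})^*C_k^{-1/2}T'^{*k}h\|^2\le\lim_{k\to\infty}\|C_k^{1/2}T'C_k^{-1/2}C_k^{-1/2}T'^{*k}h\|^2$; (iv) $P\big((T^*T)^{-1}-T'PT'^*\big)P\ge0$.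
   Context: $C_k$ is invertible for each $k$ (since $T'^k$ is left-invertible); $P_{\mathcal M}$ is the orthogonal projection onto $\mathcal M$; $\mathcal H'_u$ is invariant under $T'$ and $T'|_{\mathcal H'_u}$ is the restriction. $A$ hyponormal means $A^*A-AA^*\ge0$. The limits in (iii) exist. *)

theory Defs
  imports "HOL-Analysis.Analysis" "HOL-Library.Complex_Order"
begin

class complex_vector = real_vector +
  fixes scaleC :: "complex \<Rightarrow> 'a \<Rightarrow> 'a"
  assumes scaleC_add_right: "scaleC a (x + y) = scaleC a x + scaleC a y"
    and scaleC_add_left: "scaleC (a + b) x = scaleC a x + scaleC b x"
    and scaleC_scaleC: "scaleC a (scaleC b x) = scaleC (a * b) x"
    and scaleC_one: "scaleC 1 x = x"
    and scaleR_scaleC: "scaleR r x = scaleC (complex_of_real r) x"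

text \<open>A complex Hilbert space, presented as a (complete) real inner product space
  whose real inner product is the real part of the complex one; the multiplication
  by the imaginary unit is orthogonal.  The complex inner product is recovered
  by polarisation as \<open>cinner\<close> below.\<close>
class chilbert_space = complex_vector + real_inner + complete_space +
  assumes inner_scaleC_ii: "inner (scaleC \<i> x) (scaleC \<i> y) = inner x y"

definition cinner :: "'a::chilbert_space \<Rightarrow> 'a \<Rightarrow> complex" where
  "cinner x y = Complex (inner x y) (inner x (scaleC \<i> y))"

definition bounded_clinear :: "('a::chilbert_space \<Rightarrow> 'a) \<Rightarrow> bool" where
  "bounded_clinear T \<longleftrightarrow> bounded_linear T \<and> (\<forall>c x. T (scaleC c x) = scaleC c (T x))"

definition cadjoint :: "('a::chilbert_space \<Rightarrow> 'a) \<Rightarrow> 'a \<Rightarrow> 'a" where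
  "cadjoint T = (THE S. \<forall>x y. cinner (T x) y = cinner x (S y))"

definition left_invertible :: "('a::chilbert_space \<Rightarrow> 'a) \<Rightarrow> bool" where
  "left_invertible T \<longleftrightarrow> (\<exists>S. bounded_clinear S \<and> S \<circ> T = id)"

definition positive_op :: "('a::chilbert_space \<Rightarrow> 'a) \<Rightarrow> bool" where
  "positive_op A \<longleftrightarrow> (\<forall>x. 0 \<le> cinner (A x) x)"

definition op_le :: "('a::chilbert_space \<Rightarrow> 'a) \<Rightarrow> ('a \<Rightarrow> 'a) \<Rightarrow> bool" where
  "op_le A B \<longleftrightarrow> positive_op (\<lambda>x. B x - A x)"

definition op_sqrt :: "('a::chilbert_space \<Rightarrow> 'a) \<Rightarrow> 'a \<Rightarrow> 'a" where
  "op_sqrt A = (THE S. bounded_clinear S \<and> positive_op S \<and> S \<circ> S = A)"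

definition orth_proj :: "'a::chilbert_space set \<Rightarrow> 'a \<Rightarrow> 'a" where
  "orth_proj M x = (THE p. p \<in> M \<and> (\<forall>m\<in>M. cinner (x - p) m = 0))"

definition cauchy_dual :: "('a::chilbert_space \<Rightarrow> 'a) \<Rightarrow> 'a \<Rightarrow> 'a" where
  "cauchy_dual T = T \<circ> inv (cadjoint T \<circ> T)"

text \<open>Adjoint of an operator \<open>R\<close> acting on the subspace \<open>M\<close> (as a Hilbert space
  in its own right); values off \<open>M\<close> are normalised to \<open>0\<close>.\<close>
definition adjoint_on :: "'a::chilbert_space set \<Rightarrow> ('a \<Rightarrow> 'a) \<Rightarrow> 'a \<Rightarrow> 'a" where
  "adjoint_on M R = (THE S. (\<forall>x\<in>M. S x \<in> M) \<and> (\<forall>x. x \<notin> M \<longrightarrow> S x = 0) \<and>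
                        (\<forall>x\<in>M. \<forall>y\<in>M. cinner (R x) y = cinner x (S y)))"

definition hyponormal_on :: "'a::chilbert_space set \<Rightarrow> ('a \<Rightarrow> 'a) \<Rightarrow> bool" where
  "hyponormal_on M R \<longleftrightarrow>
     (\<forall>x\<in>M. 0 \<le> cinner (adjoint_on M R (R x) - R (adjoint_on M R x)) x)"

end

theory Submission
  imports Defs "HOL-Computational_Algebra.Formal_Power_Series"
begin


lemma scaleC_zero_right [simp]: "scaleC c (0::'a::chilbert_space) = 0"
  by (metis add_cancel_right_right scaleC_add_right)

lemma scaleC_minus_right: "scaleC c (- x) = - scaleC c (x::'a::chilbert_space)"
  by (metis add.right_inverse eq_neg_iff_add_eq_0 scaleC_add_right scaleC_zero_right)

lemma scaleC_diff_right: "scaleC c (x - y) = scaleC c x - scaleC c (y::'a::chilbert_space)"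
  by (metis diff_conv_add_uminus scaleC_add_right scaleC_minus_right)

lemma scaleC_of_real: "scaleC (complex_of_real r) x = scaleR r (x::'a::chilbert_space)"
  by (simp add: scaleR_scaleC)

lemma scaleC_ii_ii: "scaleC \<i> (scaleC \<i> x) = - (x::'a::chilbert_space)"
proof -
  have "scaleC \<i> (scaleC \<i> x) = scaleC (complex_of_real (-1)) x" by (simp add: scaleC_scaleC)
  also have "\<dots> = - x" using scaleR_scaleC[of "-1" x] by simp
  finally show ?thesis .
qed

lemma scaleC_decomp: "scaleC c x = Re c *\<^sub>R x + Im c *\<^sub>R scaleC \<i> (x::'a::chilbert_space)"
proof -
  have c: "c = complex_of_real (Re c) + complex_of_real (Im c) * \<i>"
    by (simp add: complex_eq_iff)
  have "scaleC c x = scaleC (complex_of_real (Re c)) x + scaleC (complex_of_real (Im c) * \<i>) x"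
    by (subst c) (simp add: scaleC_add_left)
  also have "\<dots> = Re c *\<^sub>R x + Im c *\<^sub>R scaleC \<i> x"
    by (simp add: scaleC_of_real flip: scaleC_scaleC)
  finally show ?thesis .
qed

lemma scaleC_scaleR_comm: "scaleC c (r *\<^sub>R x) = r *\<^sub>R scaleC c (x::'a::chilbert_space)"
  by (simp add: scaleR_scaleC scaleC_scaleC mult.commute)

lemma inner_ii_left: "inner (scaleC \<i> x) y = - inner x (scaleC \<i> (y::'a::chilbert_space))"
proof -
  have "inner (scaleC \<i> x) y = inner (scaleC \<i> (scaleC \<i> x)) (scaleC \<i> y)"
    by (rule inner_scaleC_ii[symmetric])
  then show ?thesis by (simp add: scaleC_ii_ii)
qed

lemma inner_ii_self [simp]: "inner x (scaleC \<i> (x::'a::chilbert_space)) = 0"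
  using inner_ii_left[of x x] by (simp add: inner_commute)

lemma norm_ii [simp]: "norm (scaleC \<i> (x::'a::chilbert_space)) = norm x"
  by (simp add: norm_eq_sqrt_inner inner_scaleC_ii)

lemma bounded_linear_scaleC: "bounded_linear (\<lambda>x::'a::chilbert_space. scaleC c x)"
proof -
  have "(\<lambda>x::'a. scaleC c x) = (\<lambda>x. Re c *\<^sub>R x + Im c *\<^sub>R scaleC \<i> x)"
    using scaleC_decomp by blast
  moreover have "bounded_linear (\<lambda>x::'a. scaleC \<i> x)"
    by (rule bounded_linear_intro[where K=1])
       (auto simp: scaleC_add_right scaleC_scaleR_comm)
  ultimately show ?thesis
    by (auto intro!: bounded_linear_add bounded_linear_scaleR_right bounded_linear_compose[of "\<lambda>x. _ *\<^sub>R x"] bounded_linear_ident)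
qed

lemma norm_scaleC [simp]: "norm (scaleC c (x::'a::chilbert_space)) = cmod c * norm x"
proof -
  have "(norm (scaleC c x))\<^sup>2 = (Re c)\<^sup>2 * (norm x)\<^sup>2 + (Im c)\<^sup>2 * (norm x)\<^sup>2"
    apply (subst scaleC_decomp)
    apply (simp add: power2_norm_eq_inner inner_add_left inner_add_right inner_scaleC_ii)
    apply (simp add: inner_commute[of "scaleC \<i> x" x] power2_eq_square algebra_simps)
    done
  also have "\<dots> = (cmod c * norm x)\<^sup>2"
    by (simp add: cmod_def power_mult_distrib algebra_simps)
  finally show ?thesis
    by (simp add: power2_eq_iff_nonneg)
qed

lemma Re_cinner [simp]: "Re (cinner x y) = inner x y"
  by (simp add: cinner_def)

lemma Im_cinner [simp]: "Im (cinner x y) = inner x (scaleC \<i> y)"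
  by (simp add: cinner_def)

lemma cinner_self: "cinner x x = complex_of_real ((norm x)\<^sup>2)"
  by (simp add: complex_eq_iff power2_norm_eq_inner)

lemma cnj_cinner: "cnj (cinner x y) = cinner y (x::'a::chilbert_space)"
proof -
  have "inner y (scaleC \<i> x) = - inner x (scaleC \<i> y)"
    by (metis inner_commute inner_ii_left)
  then show ?thesis by (simp add: complex_eq_iff inner_commute[of x y])
qed

lemma cinner_add_left: "cinner (x + y) z = cinner x z + cinner y (z::'a::chilbert_space)"
  by (simp add: complex_eq_iff inner_add_left)

lemma cinner_add_right: "cinner z (x + y) = cinner z x + cinner z (y::'a::chilbert_space)"
  by (simp add: complex_eq_iff inner_add_right scaleC_add_right)

lemma cinner_diff_left: "cinner (x - y) z = cinner x z - cinner y (z::'a::chilbert_space)"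
  by (simp add: complex_eq_iff inner_diff_left)

lemma cinner_diff_right: "cinner z (x - y) = cinner z x - cinner z (y::'a::chilbert_space)"
  by (simp add: complex_eq_iff inner_diff_right scaleC_diff_right)

lemma cinner_zero_left [simp]: "cinner 0 (x::'a::chilbert_space) = 0"
  by (simp add: complex_eq_iff)

lemma cinner_zero_right [simp]: "cinner x (0::'a::chilbert_space) = 0"
  by (simp add: complex_eq_iff)

lemma cinner_scaleC_left: "cinner (scaleC c x) y = c * cinner x (y::'a::chilbert_space)"
proof -
  have "cinner (scaleC c x) y = cinner (Re c *\<^sub>R x + Im c *\<^sub>R scaleC \<i> x) y"
    by (simp add: scaleC_decomp[symmetric])
  also have "\<dots> = c * cinner x y"
    by (simp add: complex_eq_iff inner_add_left inner_ii_left inner_scaleC_ii scaleC_ii_ii algebra_simps)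
  finally show ?thesis .
qed

lemma cinner_scaleC_right: "cinner x (scaleC c y) = cnj c * cinner x (y::'a::chilbert_space)"
  by (metis cnj_cinner cinner_scaleC_left complex_cnj_mult)

lemma cinner_scaleR_left: "cinner (r *\<^sub>R x) y = complex_of_real r * cinner x (y::'a::chilbert_space)"
  by (simp add: cinner_scaleC_left flip: scaleC_of_real)

lemma cinner_scaleR_right: "cinner x (r *\<^sub>R y) = complex_of_real r * cinner x (y::'a::chilbert_space)"
  by (simp add: cinner_scaleC_right flip: scaleC_of_real)

lemma cinner_minus_left: "cinner (- x) y = - cinner x (y::'a::chilbert_space)"
  using cinner_diff_left[of 0 x y] by simp

lemma cinner_minus_right: "cinner x (- y) = - cinner x (y::'a::chilbert_space)"
  using cinner_diff_right[of x 0 y] by simp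

lemma cinner_eq_zero_iff [simp]: "cinner x x = 0 \<longleftrightarrow> x = (0::'a::chilbert_space)"
  by (simp add: cinner_self)

lemma cinner_ext_right: "(\<And>y. cinner x y = cinner x' (y::'a::chilbert_space)) \<Longrightarrow> x = x'"
  by (metis cinner_diff_left cinner_eq_zero_iff eq_iff_diff_eq_0)

lemma cinner_ext_left: "(\<And>x. cinner x y = cinner x (y'::'a::chilbert_space)) \<Longrightarrow> y = y'"
  by (metis cinner_diff_right cinner_eq_zero_iff eq_iff_diff_eq_0)

lemma norm_cinner: "cmod (cinner x y) \<le> norm x * norm (y::'a::chilbert_space)"
proof (cases "cinner x y = 0")
  case True then show ?thesis by simp
next
  case False
  define c where "c = cinner x y"
  define u where "u = cnj c / complex_of_real (cmod c)"
  have cm: "cmod c > 0" using False by (simp add: c_def)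
  have "u * c = cnj c * c / complex_of_real (cmod c)" by (simp add: u_def)
  also have "\<dots> = (complex_of_real (cmod c))\<^sup>2 / complex_of_real (cmod c)"
    by (simp add: complex_norm_square[symmetric] mult.commute)
  also have "\<dots> = complex_of_real (cmod c)" using cm by (simp add: power2_eq_square)
  finally have uc: "u * c = complex_of_real (cmod c)" .
  have u1: "cmod u = 1" using cm by (simp add: u_def norm_divide)
  have "cmod c = Re (cinner (scaleC u x) y)"
    by (simp add: cinner_scaleC_left c_def[symmetric] uc)
  also have "\<dots> = inner (scaleC u x) y" by simp
  also have "\<dots> \<le> norm (scaleC u x) * norm y" by (rule norm_cauchy_schwarz)
  also have "\<dots> = norm x * norm y" using u1 by simp
  finally show ?thesis unfolding c_def .
qed

lemma complex_of_real_nonneg_iff': "(0 \<le> complex_of_real r) \<longleftrightarrow> 0 \<le> r"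
  by (simp add: less_eq_complex_def)

lemma cinner_self_nonneg [simp]: "0 \<le> cinner x (x::'a::chilbert_space)"
  by (simp only: cinner_self complex_of_real_nonneg_iff') simp


section \<open>Projection theorem and Riesz representation\<close>

lemma parallelogram:
  fixes a b :: "'a::real_inner"
  shows "(norm (a - b))\<^sup>2 + (norm (a + b))\<^sup>2 = 2 * (norm a)\<^sup>2 + 2 * (norm b)\<^sup>2"
  by (simp add: power2_norm_eq_inner inner_add_left inner_add_right inner_diff_left inner_diff_right inner_commute)

lemma proj_exists:
  fixes M :: "'a::{real_inner,complete_space} set"
  assumes cl: "closed M" and ne: "M \<noteq> {}"
    and add: "\<And>x y. x \<in> M \<Longrightarrow> y \<in> M \<Longrightarrow> x + y \<in> M"
    and sc: "\<And>c x. x \<in> M \<Longrightarrow> c *\<^sub>R x \<in> M"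
  shows "\<exists>p\<in>M. \<forall>m\<in>M. inner (x - p) m = 0"
proof -
  define d where "d = infdist x M"
  have d_le: "d \<le> norm (x - y)" if "y \<in> M" for y
    using infdist_le[OF that, of x] by (simp add: d_def dist_norm)
  have d_nn: "0 \<le> d" by (simp add: d_def infdist_nonneg)
  have "\<exists>p\<in>M. norm (x - p) < d + 1 / (real n + 1)" for n
  proof (rule ccontr)
    assume "\<not> ?thesis"
    then have "\<forall>a\<in>M. d + 1 / (real n + 1) \<le> dist x a" by (auto simp: dist_norm not_less)
    then have "d + 1 / (real n + 1) \<le> infdist x M"
      unfolding infdist_notempty[OF ne] by (intro cINF_greatest ne) auto
    then show False by (simp add: d_def)
  qed
  then obtain p where pM: "\<And>n. p n \<in> M" and pd: "\<And>n. norm (x - p n) < d + 1 / (real n + 1)"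
    by metis
  define e where "e n = 1 / (real n + 1)" for n
  have e_pos: "0 < e n" and e_le1: "e n \<le> 1" for n by (auto simp: e_def field_simps)
  have half: "(1/2) *\<^sub>R (p n + p m) \<in> M" for n m using add sc pM by blast
  have key: "(norm (p n - p m))\<^sup>2 \<le> 2 * (2 * d + 1) * (e n + e m)" for n m
  proof -
    have par: "(norm ((x - p m) - (x - p n)))\<^sup>2 + (norm ((x - p m) + (x - p n)))\<^sup>2
        = 2 * (norm (x - p m))\<^sup>2 + 2 * (norm (x - p n))\<^sup>2" by (rule parallelogram)
    have "(x - p m) + (x - p n) = 2 *\<^sub>R (x - (1/2) *\<^sub>R (p n + p m))"
      by (simp add: algebra_simps scaleR_2)
    then have "norm ((x - p m) + (x - p n)) = 2 * norm (x - (1/2) *\<^sub>R (p n + p m))" by simp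
    moreover have "d \<le> norm (x - (1/2) *\<^sub>R (p n + p m))" using d_le half by blast
    ultimately have C0: "(2 * d)\<^sup>2 \<le> (norm ((x - p m) + (x - p n)))\<^sup>2"
      using d_nn by (simp add: power_mono)
    have X0: "(norm (x - p m))\<^sup>2 \<le> (d + e m)\<^sup>2"
      using pd[of m] by (intro power_mono) (auto simp: e_def)
    have Y0: "(norm (x - p n))\<^sup>2 \<le> (d + e n)\<^sup>2"
      using pd[of n] by (intro power_mono) (auto simp: e_def)
    have nm: "(norm ((x - p m) - (x - p n))) = norm (p n - p m)"
      by (simp add: norm_minus_commute)
    have X1: "(d + e m)\<^sup>2 \<le> d\<^sup>2 + (2 * d + 1) * e m" and Y1: "(d + e n)\<^sup>2 \<le> d\<^sup>2 + (2 * d + 1) * e n"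
      using e_pos e_le1 d_nn by (auto simp: power2_eq_square algebra_simps intro!: mult_left_mono)
    have C: "4 * d\<^sup>2 \<le> (norm ((x - p m) + (x - p n)))\<^sup>2" using C0 by (simp add: power2_eq_square)
    have X: "(norm (x - p m))\<^sup>2 \<le> d\<^sup>2 + (2 * d + 1) * e m" using X0 X1 by (rule order_trans)
    have Y: "(norm (x - p n))\<^sup>2 \<le> d\<^sup>2 + (2 * d + 1) * e n" using Y0 Y1 by (rule order_trans)
    have A: "(norm (p n - p m))\<^sup>2 + (norm ((x - p m) + (x - p n)))\<^sup>2
        = 2 * (norm (x - p m))\<^sup>2 + 2 * (norm (x - p n))\<^sup>2" using par nm by (simp only:)
    have lin: "P \<le> 2*(D+em) + 2*(D+en) - 4*D"
      if "P + C = 2*X + 2*Y" "4*D \<le> C" "X \<le> D + em" "Y \<le> D + en" for P X Y C D em en :: real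
      using that unfolding distrib_left by linarith
    have "(norm (p n - p m))\<^sup>2 \<le> 2 * (d\<^sup>2 + (2 * d + 1) * e m) + 2 * (d\<^sup>2 + (2 * d + 1) * e n) - 4 * d\<^sup>2"
      by (rule lin[OF A C X Y])
    also have "\<dots> = 2 * (2 * d + 1) * (e n + e m)" by (simp add: algebra_simps)
    finally show ?thesis .
  qed
  have "Cauchy p"
  proof (rule metric_CauchyI)
    fix \<epsilon> :: real assume "0 < \<epsilon>"
    obtain N :: nat where N: "4 * (2 * d + 1) / \<epsilon>\<^sup>2 < real N"
      using reals_Archimedean2 by blast
    have "dist (p m) (p n) < \<epsilon>" if "m \<ge> N" "n \<ge> N" for m n
    proof -
      have em: "e m \<le> 1 / (real N + 1)" "e n \<le> 1 / (real N + 1)"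
        using that by (auto simp: e_def intro!: divide_left_mono)
      have "(norm (p m - p n))\<^sup>2 \<le> 2 * (2 * d + 1) * (e m + e n)" by (rule key)
      also have "\<dots> \<le> 2 * (2 * d + 1) * (2 / (real N + 1))"
        using em d_nn by (intro mult_left_mono) auto
      also have "\<dots> < \<epsilon>\<^sup>2"
      proof -
        have "4 * (2 * d + 1) < \<epsilon>\<^sup>2 * real N" using N \<open>0 < \<epsilon>\<close> by (simp add: field_simps)
        moreover have "\<epsilon>\<^sup>2 * (real N + 1) = \<epsilon>\<^sup>2 * real N + \<epsilon>\<^sup>2" by (simp add: algebra_simps)
        moreover have "0 < \<epsilon>\<^sup>2" using \<open>0 < \<epsilon>\<close> by simp
        ultimately have "4 * (2 * d + 1) < \<epsilon>\<^sup>2 * (real N + 1)" by linarith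
        then show ?thesis by (simp add: field_simps)
      qed
      finally show ?thesis using \<open>0 < \<epsilon>\<close>
        by (simp add: dist_norm power2_less_imp_less)
    qed
    then show "\<exists>M. \<forall>m\<ge>M. \<forall>n\<ge>M. dist (p m) (p n) < \<epsilon>" by blast
  qed
  then obtain p0 where lim: "p \<longlonglongrightarrow> p0" using Cauchy_convergent_iff convergent_def by blast
  have p0M: "p0 \<in> M" using cl pM lim closed_sequentially by blast
  have "norm (x - p0) \<le> d"
  proof (rule LIMSEQ_le)
    show "(\<lambda>n. norm (x - p n)) \<longlonglongrightarrow> norm (x - p0)" by (intro tendsto_intros lim)
    show "(\<lambda>n. d + 1 / (real n + 1)) \<longlonglongrightarrow> d"
    proof -
      have eq: "\<And>n. 1 / (real n + 1) = inverse (real (Suc n))" by (simp add: field_simps)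
      have "(\<lambda>n. d + inverse (real (Suc n))) \<longlonglongrightarrow> d + 0"
        by (intro tendsto_add tendsto_const LIMSEQ_inverse_real_of_nat)
      then show ?thesis unfolding eq by simp
    qed
    show "\<exists>N. \<forall>n\<ge>N. norm (x - p n) \<le> d + 1 / (real n + 1)" using pd less_imp_le by blast
  qed
  then have dx: "norm (x - p0) = d" using d_le[OF p0M] by simp
  have "inner (x - p0) m = 0" if mM: "m \<in> M" for m
  proof -
    define a where "a = inner (x - p0) m"
    define B where "B = (norm m)\<^sup>2"
    have B: "0 \<le> B" by (simp add: B_def)
    have ineq: "2 * t * a \<le> t\<^sup>2 * B" for t
    proof -
      have "p0 + t *\<^sub>R m \<in> M" using add sc p0M mM by blast
      then have "d \<le> norm (x - (p0 + t *\<^sub>R m))" by (rule d_le)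
      moreover have "x - (p0 + t *\<^sub>R m) = (x - p0) - t *\<^sub>R m" by simp
      ultimately have "d \<le> norm ((x - p0) - t *\<^sub>R m)" by simp
      then have "d\<^sup>2 \<le> (norm ((x - p0) - t *\<^sub>R m))\<^sup>2" using d_nn by (rule power_mono)
      also have "(norm ((x - p0) - t *\<^sub>R m))\<^sup>2 = (norm (x - p0))\<^sup>2 - 2 * t * a + t\<^sup>2 * B"
        unfolding power2_norm_eq_inner a_def B_def
        by (simp add: inner_diff_left inner_diff_right inner_commute[of m "x - p0"] algebra_simps power2_eq_square inner_commute[of m x] inner_commute[of m p0])
      finally show ?thesis using dx by simp
    qed
    define t where "t = a / (B + 1)"
    have B1: "B + 1 > 0" using B by simp
    have ta: "t * (B + 1) = a" using B1 by (simp add: t_def)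
    have "2 * t * a \<le> t\<^sup>2 * B" by (rule ineq)
    also have "\<dots> \<le> t\<^sup>2 * (B + 1)" by (intro mult_left_mono) auto
    also have "\<dots> = t * a" by (simp add: power2_eq_square ta[symmetric] algebra_simps)
    finally have "t * a \<le> 0" by (simp add: mult.commute)
    then have "a\<^sup>2 / (B + 1) \<le> 0" by (simp add: t_def power2_eq_square)
    then have "a\<^sup>2 \<le> 0" using B1 by (simp add: divide_le_0_iff)
    then show ?thesis by (simp add: a_def)
  qed
  then show ?thesis using p0M by blast
qed

lemma riesz_real:
  fixes f :: "'a::{real_inner,complete_space} \<Rightarrow> real"
  assumes f: "bounded_linear f"
  shows "\<exists>z. \<forall>x. f x = inner x z"
proof (cases "\<forall>x. f x = 0")
  case True then show ?thesis by (intro exI[of _ 0]) simp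
next
  case False
  then obtain x0 where x0: "f x0 \<noteq> 0" by blast
  interpret f: bounded_linear f by (rule f)
  define K where "K = {x. f x = 0}"
  have "closed K" unfolding K_def
    by (intro closed_Collect_eq continuous_intros f.continuous_on continuous_on_id)
  moreover have "K \<noteq> {}" by (auto simp: K_def intro!: exI[of _ 0])
  ultimately obtain p where pK: "p \<in> K" and orth: "\<forall>m\<in>K. inner ((x0 /\<^sub>R f x0) - p) m = 0"
    using proj_exists[of K "x0 /\<^sub>R f x0"] unfolding K_def by (auto simp: f.add f.scale)
  define w where "w = (x0 /\<^sub>R f x0) - p"
  have fw: "f w = 1" using pK x0 by (simp add: w_def K_def f.diff f.scale)
  then have "w \<noteq> 0" by auto
  then have ww: "inner w w \<noteq> 0" by simp
  have "f x = inner x (w /\<^sub>R inner w w)" for x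
  proof -
    have "x - f x *\<^sub>R w \<in> K" by (simp add: K_def f.diff f.scale fw)
    then have "inner w (x - f x *\<^sub>R w) = 0" using orth by (simp add: w_def)
    then have "inner x w = f x * inner w w" by (simp add: inner_diff_right inner_commute)
    then show ?thesis using ww by (simp add: field_simps)
  qed
  then show ?thesis by blast
qed


section \<open>Bounded complex-linear operators and adjoints\<close>

lemma bcl_linear: "bounded_clinear T \<Longrightarrow> bounded_linear T"
  by (simp add: bounded_clinear_def)

lemma bcl_scaleC: "bounded_clinear T \<Longrightarrow> T (scaleC c x) = scaleC c (T x)"
  by (simp add: bounded_clinear_def)

lemma bcl_add: "bounded_clinear T \<Longrightarrow> T (x + y) = T x + T y"
  by (simp add: bounded_clinear_def linear_add bounded_linear.linear)

lemma bcl_diff: "bounded_clinear T \<Longrightarrow> T (x - y) = T x - T y"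
  by (simp add: bounded_clinear_def linear_diff bounded_linear.linear)

lemma bcl_minus: "bounded_clinear T \<Longrightarrow> T (- x) = - T x"
  by (simp add: bounded_clinear_def linear_neg bounded_linear.linear)

lemma bcl_zero: "bounded_clinear T \<Longrightarrow> T 0 = 0"
  by (simp add: bounded_clinear_def linear_0 bounded_linear.linear)

lemma bcl_scaleR: "bounded_clinear T \<Longrightarrow> T (r *\<^sub>R x) = r *\<^sub>R T x"
  by (simp add: bounded_clinear_def linear_scale bounded_linear.linear)

lemma bcl_bound: "bounded_clinear T \<Longrightarrow> \<exists>K>0. \<forall>x. norm (T x) \<le> norm x * K"
  by (simp add: bounded_clinear_def bounded_linear.pos_bounded)

lemma bcl_comp: "bounded_clinear A \<Longrightarrow> bounded_clinear B \<Longrightarrow> bounded_clinear (A \<circ> B)"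
  unfolding bounded_clinear_def comp_def by (auto intro: bounded_linear_compose)

lemma bcl_id: "bounded_clinear id"
  by (simp add: bounded_clinear_def bounded_linear_ident id_def)

lemma bcl_funpow: "bounded_clinear T \<Longrightarrow> bounded_clinear (T ^^ n)"
  by (induction n) (simp_all add: bcl_id bcl_comp)

lemma bcl_intro:
  assumes "\<And>x y. T (x + y) = T x + T y" "\<And>c x. T (scaleC c x) = scaleC c (T x)"
    "\<And>x. norm (T x) \<le> norm x * K"
  shows "bounded_clinear T"
  unfolding bounded_clinear_def
  using assms by (auto intro!: bounded_linear_intro simp: scaleR_scaleC)

lemma bcl_continuous: "bounded_clinear T \<Longrightarrow> (f \<longlongrightarrow> l) F \<Longrightarrow> ((\<lambda>x. T (f x)) \<longlongrightarrow> T l) F"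
  by (simp add: bounded_clinear_def bounded_linear.tendsto)

lemma adjoint_exists:
  fixes T :: "'a::chilbert_space \<Rightarrow> 'a"
  assumes T: "bounded_clinear T"
  shows "\<exists>S. \<forall>x y. cinner (T x) y = cinner x (S y)"
proof -
  have "\<forall>y. \<exists>z. \<forall>x. inner (T x) y = inner x z"
  proof
    fix y
    have "bounded_linear (\<lambda>x. inner (T x) y)"
      using T by (intro bounded_linear_compose[OF bounded_linear_inner_left] bcl_linear)
    then show "\<exists>z. \<forall>x. inner (T x) y = inner x z" by (rule riesz_real)
  qed
  then obtain S where S: "\<And>x y. inner (T x) y = inner x (S y)" by metis
  have "cinner (T x) y = cinner x (S y)" for x y
  proof -
    have "inner (T x) (scaleC \<i> y) = - inner (scaleC \<i> (T x)) y"
      by (simp add: inner_ii_left)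
    also have "\<dots> = - inner (T (scaleC \<i> x)) y" using T by (simp add: bcl_scaleC)
    also have "\<dots> = - inner (scaleC \<i> x) (S y)" by (simp add: S)
    also have "\<dots> = inner x (scaleC \<i> (S y))" by (simp add: inner_ii_left)
    finally show ?thesis by (simp add: complex_eq_iff S)
  qed
  then show ?thesis by blast
qed

lemma adjoint_unique_ex:
  fixes T :: "'a::chilbert_space \<Rightarrow> 'a"
  assumes T: "bounded_clinear T"
  shows "\<exists>!S. \<forall>x y. cinner (T x) y = cinner x (S y)"
proof -
  obtain S where S: "\<forall>x y. cinner (T x) y = cinner x (S y)" using adjoint_exists[OF T] by blast
  moreover have "S' = S" if "\<forall>x y. cinner (T x) y = cinner x (S' y)" for S'
  proof
    fix y show "S' y = S y" using that S by (intro cinner_ext_left) metis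
  qed
  ultimately show ?thesis by blast
qed

lemma cadjoint_eq:
  assumes "bounded_clinear T"
  shows "cinner (T x) y = cinner x (cadjoint T y)"
  using theI'[OF adjoint_unique_ex[OF assms]] unfolding cadjoint_def by blast

lemma cadjoint_eq2:
  assumes "bounded_clinear T"
  shows "cinner (cadjoint T x) y = cinner x (T y)"
  by (metis assms cadjoint_eq cnj_cinner)

lemma cadjoint_unique:
  assumes "bounded_clinear T" "\<And>x y. cinner (T x) y = cinner x (S y)"
  shows "cadjoint T = S"
  unfolding cadjoint_def using adjoint_unique_ex[OF assms(1)] assms(2)
  by (intro the1_equality) auto

lemma bcl_cadjoint:
  fixes T :: "'a::chilbert_space \<Rightarrow> 'a"
  assumes T: "bounded_clinear T"
  shows "bounded_clinear (cadjoint T)"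
proof -
  let ?S = "cadjoint T"
  obtain K where K: "K > 0" "\<And>x. norm (T x) \<le> norm x * K" using bcl_bound[OF T] by blast
  show ?thesis
  proof (rule bcl_intro[where K=K])
    fix x y show "?S (x + y) = ?S x + ?S y"
      by (rule cinner_ext_left) (simp add: cadjoint_eq[OF T, symmetric] cinner_add_right)
  next
    fix c x show "?S (scaleC c x) = scaleC c (?S x)"
      by (rule cinner_ext_left) (simp add: cadjoint_eq[OF T, symmetric] cinner_scaleC_right)
  next
    fix x
    have "(norm (?S x))\<^sup>2 = Re (cinner (?S x) (?S x))" by (simp add: cinner_self)
    also have "\<dots> = Re (cinner (T (?S x)) x)" by (simp add: cadjoint_eq[OF T])
    also have "\<dots> \<le> cmod (cinner (T (?S x)) x)" by (rule complex_Re_le_cmod)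
    also have "\<dots> \<le> norm (T (?S x)) * norm x" by (rule norm_cinner)
    also have "\<dots> \<le> norm (?S x) * K * norm x" using K by (simp add: mult_right_mono)
    finally have "norm (?S x) * norm (?S x) \<le> norm (?S x) * (K * norm x)"
      by (simp add: power2_eq_square mult.assoc)
    then show "norm (?S x) \<le> norm x * K" using K(1)
      by (cases "norm (?S x) = 0") (auto simp: mult.commute)
  qed
qed

lemma cadjoint_cadjoint:
  assumes "bounded_clinear T" shows "cadjoint (cadjoint T) = T"
  by (rule cadjoint_unique[OF bcl_cadjoint[OF assms]]) (simp add: cadjoint_eq2 assms)

lemma cadjoint_comp:
  assumes "bounded_clinear A" "bounded_clinear B"
  shows "cadjoint (A \<circ> B) = cadjoint B \<circ> cadjoint A"
  by (rule cadjoint_unique[OF bcl_comp[OF assms]]) (simp add: cadjoint_eq assms)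

lemma cadjoint_id: "cadjoint id = id"
proof -
  have "\<And>x y. cinner (id x) y = cinner x (id y)" by simp
  then show ?thesis by (rule cadjoint_unique[OF bcl_id])
qed

lemma cadjoint_funpow:
  assumes "bounded_clinear T" shows "cadjoint (T ^^ n) = cadjoint T ^^ n"
proof (induction n)
  case 0 then show ?case by (simp only: funpow.simps(1) cadjoint_id)
next
  case (Suc n)
  have "cadjoint (T ^^ Suc n) = cadjoint (T ^^ n \<circ> T)" by (simp only: funpow_Suc_right)
  also have "\<dots> = cadjoint T \<circ> cadjoint (T ^^ n)" by (rule cadjoint_comp[OF bcl_funpow[OF assms] assms])
  also have "\<dots> = cadjoint T ^^ Suc n" by (simp add: Suc)
  finally show ?case .
qed

lemma positive_real:
  assumes "0 \<le> (z::complex)" shows "z = complex_of_real (Re z)"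
  using assms by (simp add: less_eq_complex_def complex_eq_iff)

lemma positive_selfadj:
  fixes S :: "'a::chilbert_space \<Rightarrow> 'a"
  assumes S: "bounded_clinear S" and pos: "positive_op S"
  shows "cadjoint S = S"
proof (rule cadjoint_unique[OF S])
  define h where "h x y = cinner (S x) y - cinner x (S y)" for x y
  have h0: "h x x = 0" for x
  proof -
    have "cinner x (S x) = cnj (cinner (S x) x)" by (simp add: cnj_cinner)
    moreover have "cinner (S x) x = complex_of_real (Re (cinner (S x) x))"
      using pos unfolding positive_op_def by (metis positive_real)
    ultimately show ?thesis by (simp add: h_def)
  qed
  have hadd: "h (x + y) (x + y) = h x x + h x y + h y x + h y y" for x y
    by (simp add: h_def bcl_add[OF S] cinner_add_left cinner_add_right)
  have hii: "h (x + scaleC \<i> y) (x + scaleC \<i> y) = h x x - \<i> * h x y + \<i> * h y x + h y y" for x y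
    by (simp add: h_def bcl_add[OF S] bcl_scaleC[OF S] cinner_add_left cinner_add_right
        cinner_scaleC_left cinner_scaleC_right algebra_simps)
  fix x y
  have "h x y + h y x = 0" using hadd[of x y] h0 by simp
  moreover have "- \<i> * h x y + \<i> * h y x = 0" using hii[of x y] h0 by simp
  ultimately have e0: "h x y + h y x = 0" and e1: "\<i> * (h y x - h x y) = 0"
    by (simp_all add: algebra_simps)
  from e1 have "h y x = h x y" by simp
  with e0 have "h x y = 0" by simp
  then show "cinner (S x) y = cinner x (S y)" by (simp add: h_def)
qed


section \<open>Left-invertible operators, Gram operators, projections\<close>

lemma tendsto_cinner_left:
  fixes f :: "_ \<Rightarrow> 'a::chilbert_space"
  assumes "(f \<longlongrightarrow> l) F"
  shows "((\<lambda>x. cinner (f x) m) \<longlongrightarrow> cinner l m) F"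
proof -
  have "((\<lambda>x. Complex (inner (f x) m) (inner (f x) (scaleC \<i> m))) \<longlongrightarrow>
         Complex (inner l m) (inner l (scaleC \<i> m))) F"
    by (intro tendsto_intros assms)
  then show ?thesis by (simp add: cinner_def)
qed

lemma cinner_selfadj:
  assumes "bounded_clinear G" "cadjoint G = G"
  shows "cinner (G x) y = cinner x (G y)"
  using cadjoint_eq[OF assms(1), of x y] assms(2) by simp

lemma bounded_below_left_inv:
  fixes V :: "'a::chilbert_space \<Rightarrow> 'a"
  assumes V: "bounded_clinear V" and li: "left_invertible V"
  shows "\<exists>b>0. \<forall>x. b * norm x \<le> norm (V x)"
proof -
  obtain S where S: "bounded_clinear S" "S \<circ> V = id" using li by (auto simp: left_invertible_def)
  obtain K where K: "K > 0" "\<And>x. norm (S x) \<le> norm x * K" using bcl_bound[OF S(1)] by blast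
  have "(1 / K) * norm x \<le> norm (V x)" for x
  proof -
    have "norm x = norm (S (V x))" using fun_cong[OF S(2), of x] by simp
    also have "\<dots> \<le> norm (V x) * K" by (rule K(2))
    finally show ?thesis using K(1) by (simp add: field_simps)
  qed
  then show ?thesis using K(1) by (intro exI[of _ "1/K"]) auto
qed

lemma closed_range_bb:
  fixes V :: "'a::chilbert_space \<Rightarrow> 'a"
  assumes V: "bounded_clinear V" and b: "b > 0" "\<And>x. b * norm x \<le> norm (V x)"
  shows "closed (range V)"
proof (rule closed_sequential_limits[THEN iffD2], intro allI impI, elim conjE)
  fix y l assume yr: "\<forall>n. y n \<in> range V" and yl: "y \<longlonglongrightarrow> l"
  define x where "x = (\<lambda>n. inv V (y n))"
  have x: "y n = V (x n)" for n using yr by (simp add: x_def f_inv_into_f)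
  have "Cauchy x"
  proof (rule metric_CauchyI)
    fix e :: real assume e: "e > 0"
    have "Cauchy y" using yl by (rule LIMSEQ_imp_Cauchy)
    then obtain N where N: "\<forall>m\<ge>N. \<forall>n\<ge>N. dist (y m) (y n) < b * e"
      using metric_CauchyD[of y "b * e"] b(1) e by auto
    have "dist (x m) (x n) < e" if "m \<ge> N" "n \<ge> N" for m n
    proof -
      have "b * norm (x m - x n) \<le> norm (V (x m - x n))" by (rule b(2))
      also have "\<dots> = dist (y m) (y n)" by (simp add: x bcl_diff[OF V] dist_norm)
      also have "\<dots> < b * e" using N that by blast
      finally show ?thesis using b(1) by (simp add: dist_norm)
    qed
    then show "\<exists>M. \<forall>m\<ge>M. \<forall>n\<ge>M. dist (x m) (x n) < e" by blast
  qed
  then obtain x0 where "x \<longlonglongrightarrow> x0" using Cauchy_convergent_iff convergent_def by blast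
  then have "(\<lambda>n. V (x n)) \<longlonglongrightarrow> V x0" by (rule bcl_continuous[OF V])
  moreover have "y = (\<lambda>n. V (x n))" by (rule ext) (rule x)
  then have "(\<lambda>n. V (x n)) \<longlonglongrightarrow> l" using yl by simp
  ultimately have "l = V x0" using LIMSEQ_unique by blast
  then show "l \<in> range V" by blast
qed

lemma gram_props:
  fixes V :: "'a::chilbert_space \<Rightarrow> 'a"
  assumes V: "bounded_clinear V" and b: "b > 0" "\<And>x. b * norm x \<le> norm (V x)"
  defines "G \<equiv> cadjoint V \<circ> V"
  shows "bounded_clinear G" "cadjoint G = G" "\<And>x. b\<^sup>2 * norm x \<le> norm (G x)" "bij G"
    "\<And>x. cinner (G x) x = cinner (V x) (V x)"
proof -
  show Gb: "bounded_clinear G" unfolding G_def by (intro bcl_comp bcl_cadjoint V)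
  show "cadjoint G = G" unfolding G_def
    by (simp add: cadjoint_comp[OF bcl_cadjoint[OF V] V] cadjoint_cadjoint[OF V])
  show GV: "cinner (G x) x = cinner (V x) (V x)" for x
    by (simp add: G_def cadjoint_eq2[OF V])
  have ip: "inner (G x) x = (norm (V x))\<^sup>2" for x
    using arg_cong[OF GV[of x], of Re] by (simp add: power2_norm_eq_inner)
  show lb: "b\<^sup>2 * norm x \<le> norm (G x)" for x
  proof -
    have "(b * norm x)\<^sup>2 \<le> (norm (V x))\<^sup>2" using b by (intro power_mono) auto
    also have "\<dots> = inner (G x) x" by (simp add: ip)
    also have "\<dots> \<le> norm (G x) * norm x" by (rule norm_cauchy_schwarz)
    finally have "(b\<^sup>2 * norm x) * norm x \<le> norm (G x) * norm x"
      by (simp add: power2_eq_square mult.assoc mult.left_commute)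
    then show ?thesis
      by (cases "norm x = 0") (auto simp: mult_le_cancel_right)
  qed
  have b2: "b\<^sup>2 > 0" using b by simp
  have inj: "inj G"
  proof (rule injI)
    fix x y assume "G x = G y"
    then have "G (x - y) = 0" by (simp add: bcl_diff[OF Gb])
    then have "b\<^sup>2 * norm (x - y) \<le> 0" using lb[of "x - y"] by simp
    then show "x = y" using b2 by (simp add: mult_le_0_iff)
  qed
  have cl: "closed (range G)" by (rule closed_range_bb[OF Gb b2 lb])
  have surj: "surj G"
  proof -
    have "z \<in> range G" for z
    proof -
      have "\<exists>p\<in>range G. \<forall>m\<in>range G. inner (z - p) m = 0"
      proof (rule proj_exists[OF cl])
        show "range G \<noteq> {}" by simp
        show "x + y \<in> range G" if "x \<in> range G" "y \<in> range G" for x y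
          using that by (auto simp: bcl_add[OF Gb, symmetric])
        show "c *\<^sub>R x \<in> range G" if "x \<in> range G" for c x
          using that by (auto simp: bcl_scaleR[OF Gb, symmetric])
      qed
      then obtain p where p: "p \<in> range G" "\<forall>m\<in>range G. inner (z - p) m = 0" by blast
      have "inner (z - p) (G (z - p)) = 0" using p(2) by blast
      then have "(norm (V (z - p)))\<^sup>2 = 0" by (simp add: ip[symmetric] inner_commute)
      then have "V (z - p) = 0" by simp
      then have "b * norm (z - p) \<le> 0" using b(2)[of "z - p"] by simp
      moreover have "0 < b * norm (z - p)" if "z \<noteq> p" using b(1) that by simp
      ultimately have "z - p = 0" by fastforce
      then show ?thesis using p(1) by simp
    qed
    then show ?thesis by blast
  qed
  show "bij G" using inj surj by (simp add: bij_def)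
qed

lemma inv_bcl:
  fixes G :: "'a::chilbert_space \<Rightarrow> 'a"
  assumes G: "bounded_clinear G" and bij: "bij G" and c: "c > 0" "\<And>x. c * norm x \<le> norm (G x)"
  shows "bounded_clinear (inv G)"
proof -
  have GI: "G (inv G y) = y" for y using bij by (simp add: bij_is_surj surj_f_inv_f)
  have IG: "inv G (G x) = x" for x using bij by (simp add: bij_is_inj inv_f_f)
  show ?thesis
  proof (rule bcl_intro[where K="1/c"])
    fix x y show "inv G (x + y) = inv G x + inv G y"
      by (metis GI IG bcl_add[OF G])
  next
    fix a x show "inv G (scaleC a x) = scaleC a (inv G x)"
      by (metis GI IG bcl_scaleC[OF G])
  next
    fix x
    have "c * norm (inv G x) \<le> norm x" using c(2)[of "inv G x"] by (simp add: GI)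
    then show "norm (inv G x) \<le> norm x * (1 / c)" using c(1) by (simp add: field_simps)
  qed
qed

lemma inv_selfadj:
  fixes G :: "'a::chilbert_space \<Rightarrow> 'a"
  assumes G: "bounded_clinear G" and bij: "bij G" and sa: "cadjoint G = G"
    and I: "bounded_clinear (inv G)"
  shows "cadjoint (inv G) = inv G"
proof (rule cadjoint_unique[OF I])
  have GI: "G (inv G y) = y" for y using bij by (simp add: bij_is_surj surj_f_inv_f)
  fix x y
  have "cinner (inv G x) y = cinner (inv G x) (G (inv G y))" by (simp add: GI)
  also have "\<dots> = cinner (G (inv G x)) (inv G y)" by (simp add: cinner_selfadj[OF G sa])
  finally show "cinner (inv G x) y = cinner x (inv G y)" by (simp add: GI)
qed

lemma left_inv_comp:
  assumes "left_invertible A" "left_invertible B"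
  shows "left_invertible (A \<circ> B)"
proof -
  obtain SA SB where "bounded_clinear SA" "SA \<circ> A = id" "bounded_clinear SB" "SB \<circ> B = id"
    using assms by (auto simp: left_invertible_def)
  moreover have "(SB \<circ> SA) \<circ> (A \<circ> B) = SB \<circ> (SA \<circ> A) \<circ> B" by (simp add: comp_assoc)
  ultimately show ?thesis unfolding left_invertible_def
    by (intro exI[of _ "SB \<circ> SA"]) (simp add: bcl_comp)
qed

lemma left_inv_funpow:
  assumes "left_invertible A" shows "left_invertible (A ^^ n)"
proof (induction n)
  case 0 then show ?case unfolding left_invertible_def by (intro exI[of _ id]) (simp add: bcl_id)
next
  case (Suc n) then show ?case unfolding funpow.simps(2) by (rule left_inv_comp[OF assms])
qed

lemma gram_proj:
  fixes V :: "'a::chilbert_space \<Rightarrow> 'a"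
  assumes V: "bounded_clinear V" and b: "b > 0" "\<And>x. b * norm x \<le> norm (V x)"
  shows "(V \<circ> inv (cadjoint V \<circ> V) \<circ> cadjoint V) h \<in> range V"
    "\<And>m. m \<in> range V \<Longrightarrow> cinner (h - (V \<circ> inv (cadjoint V \<circ> V) \<circ> cadjoint V) h) m = 0"
proof -
  let ?G = "cadjoint V \<circ> V"
  have bij: "bij ?G" using gram_props[OF V b] by blast
  have GI0: "?G (inv ?G y) = y" for y using surj_f_inv_f[OF bij_is_surj[OF bij]] .
  have GI: "cadjoint V (V (inv ?G y)) = y" for y using GI0[of y] by simp
  show "(V \<circ> inv (cadjoint V \<circ> V) \<circ> cadjoint V) h \<in> range V" by simp
  fix m assume "m \<in> range V"
  then obtain u where u: "m = V u" by blast
  have "cinner (h - V (inv ?G (cadjoint V h))) (V u)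
      = cinner (cadjoint V (h - V (inv ?G (cadjoint V h)))) u"
    by (simp add: cadjoint_eq2[OF V])
  also have "\<dots> = cinner (cadjoint V h - ?G (inv ?G (cadjoint V h))) u"
    by (simp add: bcl_diff[OF bcl_cadjoint[OF V]])
  also have "\<dots> = 0" by (simp add: GI)
  finally show "cinner (h - (V \<circ> inv (cadjoint V \<circ> V) \<circ> cadjoint V) h) m = 0" by (simp add: u)
qed

lemma orth_proj_eqI:
  fixes M :: "'a::chilbert_space set"
  assumes sub: "\<And>a b. a \<in> M \<Longrightarrow> b \<in> M \<Longrightarrow> a - b \<in> M"
    and p: "p \<in> M" "\<forall>m\<in>M. cinner (x - p) m = 0"
  shows "orth_proj M x = p"
  unfolding orth_proj_def
proof (rule the_equality)
  show "p \<in> M \<and> (\<forall>m\<in>M. cinner (x - p) m = 0)" using p by blast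
  fix q assume q: "q \<in> M \<and> (\<forall>m\<in>M. cinner (x - q) m = 0)"
  have d: "p - q \<in> M" using sub p q by blast
  have "cinner ((x - q) - (x - p)) (p - q) = 0"
    using p q d by (simp add: cinner_diff_left)
  then have "cinner (p - q) (p - q) = 0" by simp
  then show "q = p" by simp
qed

lemma norm_add_sq: "(norm (a + c))\<^sup>2 = (norm a)\<^sup>2 + (norm c)\<^sup>2 + 2 * inner a (c::'a::real_inner)"
  by (simp add: power2_norm_eq_inner inner_add_left inner_add_right inner_commute[of c a])

lemma decreasing_proj_limit:
  fixes Q :: "nat \<Rightarrow> 'a::chilbert_space \<Rightarrow> 'a" and M :: "nat \<Rightarrow> 'a set"
  assumes dec: "\<And>k. M (Suc k) \<subseteq> M k" and cl: "\<And>k. closed (M k)"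
    and QM: "\<And>k h. Q k h \<in> M k"
    and orth: "\<And>k h m. m \<in> M k \<Longrightarrow> cinner (h - Q k h) m = 0"
  shows "\<exists>L. (\<lambda>k. Q k h) \<longlonglongrightarrow> L \<and> L \<in> (\<Inter>k. M k) \<and> (\<forall>m\<in>(\<Inter>k. M k). cinner (h - L) m = 0)"
proof -
  have mono: "M j \<subseteq> M k" if "k \<le> j" for j k
    using lift_Suc_antimono_le[of M, OF dec that] .
  have orth_r: "inner (h - Q k h) m = 0" if "m \<in> M k" for k m
    using orth[OF that, of h] by (metis Re_cinner zero_complex.simps(1))
  have pyth: "(norm (Q k h))\<^sup>2 = (norm (Q j h))\<^sup>2 + (norm (Q k h - Q j h))\<^sup>2" if "k \<le> j" for j k
  proof -
    have "Q j h \<in> M k" using mono[OF that] QM by blast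
    then have i1: "inner (h - Q k h) (Q j h) = 0" by (rule orth_r)
    have i2: "inner (h - Q j h) (Q j h) = 0" by (rule orth_r[OF QM])
    have "inner (Q j h) (Q k h - Q j h) = inner (h - Q j h) (Q j h) - inner (h - Q k h) (Q j h)"
      by (simp add: inner_diff_left inner_diff_right inner_commute)
    then have z: "inner (Q j h) (Q k h - Q j h) = 0" using i1 i2 by simp
    have "Q k h = Q j h + (Q k h - Q j h)" by simp
    then have "(norm (Q k h))\<^sup>2 = (norm (Q j h + (Q k h - Q j h)))\<^sup>2" by simp
    also have "\<dots> = (norm (Q j h))\<^sup>2 + (norm (Q k h - Q j h))\<^sup>2 + 2 * inner (Q j h) (Q k h - Q j h)"
      by (rule norm_add_sq)
    finally show ?thesis using z by simp
  qed
  define a where "a k = (norm (Q k h))\<^sup>2" for k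
  have "decseq a"
  proof (rule decseq_SucI)
    fix n
    have e: "a n = a (Suc n) + (norm (Q n h - Q (Suc n) h))\<^sup>2" unfolding a_def by (rule pyth) simp
    show "a (Suc n) \<le> a n" unfolding e by simp
  qed
  then obtain La where "a \<longlonglongrightarrow> La" using decseq_convergent[of a 0] by (auto simp: a_def)
  then have Ca: "Cauchy a" by (rule LIMSEQ_imp_Cauchy)
  have "Cauchy (\<lambda>k. Q k h)"
  proof (rule metric_CauchyI)
    fix e :: real assume e: "e > 0"
    then obtain N where N: "\<forall>m\<ge>N. \<forall>n\<ge>N. dist (a m) (a n) < e\<^sup>2"
      using metric_CauchyD[OF Ca, of "e\<^sup>2"] by auto
    have lt: "dist (Q m h) (Q n h) < e" if mn: "m \<ge> N" "n \<ge> N" "m \<le> n" for m n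
    proof -
      have "(norm (Q m h - Q n h))\<^sup>2 = a m - a n" using pyth[OF mn(3)] by (simp add: a_def)
      also have "\<dots> < e\<^sup>2"
      proof -
        have "\<bar>a m - a n\<bar> < e\<^sup>2" using N mn(1,2) by (simp add: dist_real_def)
        then show ?thesis by (simp add: abs_less_iff)
      qed
      finally show ?thesis using e by (simp add: dist_norm power2_less_imp_less)
    qed
    have "dist (Q m h) (Q n h) < e" if mn: "m \<ge> N" "n \<ge> N" for m n
    proof (cases "m \<le> n")
      case True show ?thesis by (rule lt[OF mn True])
    next
      case False
      then have "dist (Q n h) (Q m h) < e" using lt[of n m] mn by simp
      then show ?thesis by (simp add: dist_commute)
    qed
    then show "\<exists>M. \<forall>m\<ge>M. \<forall>n\<ge>M. dist (Q m h) (Q n h) < e" by blast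
  qed
  then obtain L where L: "(\<lambda>k. Q k h) \<longlonglongrightarrow> L" using Cauchy_convergent_iff convergent_def by blast
  have LM: "L \<in> M k" for k
  proof -
    have lim: "(\<lambda>j. Q (j + k) h) \<longlonglongrightarrow> L" using L by (rule LIMSEQ_ignore_initial_segment)
    have s1: "Q (j + k) h \<in> M k" for j using mono[of k "j + k"] QM by auto
    show ?thesis by (rule closed_sequentially[OF cl s1 lim])
  qed
  have "cinner (h - L) m = 0" if m: "m \<in> (\<Inter>k. M k)" for m
  proof -
    have "(\<lambda>k. cinner (h - Q k h) m) \<longlonglongrightarrow> cinner (h - L) m"
      by (intro tendsto_cinner_left tendsto_diff tendsto_const L)
    moreover have "(\<lambda>k. cinner (h - Q k h) m) = (\<lambda>k. 0)" using m by (intro ext orth) blast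
    ultimately have "(\<lambda>k. 0) \<longlonglongrightarrow> cinner (h - L) m" by simp
    from LIMSEQ_unique[OF tendsto_const this] show ?thesis by simp
  qed
  then show ?thesis using L LM by blast
qed


instance chilbert_space \<subseteq> banach ..

section \<open>Cauchy product for bounded bilinear maps\<close>

lemma Cauchy_product_sums_bilinear:
  fixes a :: "nat \<Rightarrow> 'a::banach" and b :: "nat \<Rightarrow> 'b::banach"
    and prod :: "'a \<Rightarrow> 'b \<Rightarrow> 'c::banach"
  assumes bb: "bounded_bilinear prod"
    and a: "summable (\<lambda>k. norm (a k))"
    and b: "summable (\<lambda>k. norm (b k))"
  shows "(\<lambda>k. \<Sum>i\<le>k. prod (a i) (b (k - i))) sums prod (\<Sum>k. a k) (\<Sum>k. b k)"
proof -
  interpret P: bounded_bilinear prod by (rule bb)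
  obtain K where K: "\<And>x y. norm (prod x y) \<le> norm x * norm y * K" using P.bounded by blast
  let ?S1 = "\<lambda>n::nat. {..<n} \<times> {..<n}"
  let ?S2 = "\<lambda>n::nat. {(i,j). i + j < n}"
  have S1_mono: "\<And>m n. m \<le> n \<Longrightarrow> ?S1 m \<subseteq> ?S1 n" by auto
  have S2_le_S1: "\<And>n. ?S2 n \<subseteq> ?S1 n" by auto
  have S1_le_S2: "\<And>n. ?S1 (n div 2) \<subseteq> ?S2 n" by auto
  have finite_S1: "\<And>n. finite (?S1 n)" by simp
  with S2_le_S1 have finite_S2: "\<And>n. finite (?S2 n)" by (rule finite_subset)
  let ?g = "\<lambda>(i,j). prod (a i) (b j)"
  let ?f = "\<lambda>(i,j). norm (a i) * norm (b j)"
  have f_nonneg: "\<And>x. 0 \<le> ?f x" by auto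
  then have norm_sum_f: "\<And>A. norm (sum ?f A) = sum ?f A"
    unfolding real_norm_def
    by (simp only: abs_of_nonneg sum_nonneg [rule_format])
  have prod_sum: "prod (\<Sum>k<n. a k) (\<Sum>k<n. b k) = sum ?g (?S1 n)" for n
    by (unfold P.sum_left, unfold P.sum_right, rule sum.cartesian_product)
  have "(\<lambda>n. prod (\<Sum>k<n. a k) (\<Sum>k<n. b k)) \<longlonglongrightarrow> prod (\<Sum>k. a k) (\<Sum>k. b k)"
    by (intro P.tendsto summable_LIMSEQ summable_norm_cancel [OF a] summable_norm_cancel [OF b])
  then have 1: "(\<lambda>n. sum ?g (?S1 n)) \<longlonglongrightarrow> prod (\<Sum>k. a k) (\<Sum>k. b k)"
    by (simp only: prod_sum)
  have "(\<lambda>n. (\<Sum>k<n. norm (a k)) * (\<Sum>k<n. norm (b k))) \<longlonglongrightarrow> (\<Sum>k. norm (a k)) * (\<Sum>k. norm (b k))"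
    using a b by (intro tendsto_mult summable_LIMSEQ)
  then have "(\<lambda>n. sum ?f (?S1 n)) \<longlonglongrightarrow> (\<Sum>k. norm (a k)) * (\<Sum>k. norm (b k))"
    by (simp only: sum_product sum.Sigma [rule_format] finite_lessThan)
  then have "convergent (\<lambda>n. sum ?f (?S1 n))"
    by (rule convergentI)
  then have Cauchy: "Cauchy (\<lambda>n. sum ?f (?S1 n))"
    by (rule convergent_Cauchy)
  have "Zfun (\<lambda>n. sum ?f (?S1 n - ?S2 n)) sequentially"
  proof (rule ZfunI, simp only: eventually_sequentially norm_sum_f)
    fix r :: real
    assume r: "0 < r"
    from CauchyD [OF Cauchy r] obtain N
      where "\<forall>m\<ge>N. \<forall>n\<ge>N. norm (sum ?f (?S1 m) - sum ?f (?S1 n)) < r" ..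
    then have "\<And>m n. N \<le> n \<Longrightarrow> n \<le> m \<Longrightarrow> norm (sum ?f (?S1 m - ?S1 n)) < r"
      by (simp only: sum_diff finite_S1 S1_mono)
    then have N: "\<And>m n. N \<le> n \<Longrightarrow> n \<le> m \<Longrightarrow> sum ?f (?S1 m - ?S1 n) < r"
      by (simp only: norm_sum_f)
    show "\<exists>N. \<forall>n\<ge>N. sum ?f (?S1 n - ?S2 n) < r"
    proof (intro exI allI impI)
      fix n
      assume "2 * N \<le> n"
      then have n: "N \<le> n div 2" by simp
      have "sum ?f (?S1 n - ?S2 n) \<le> sum ?f (?S1 n - ?S1 (n div 2))"
        by (intro sum_mono2 finite_Diff finite_S1 f_nonneg Diff_mono subset_refl S1_le_S2)
      also have "\<dots> < r"
        using n div_le_dividend by (rule N)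
      finally show "sum ?f (?S1 n - ?S2 n) < r" .
    qed
  qed
  then have Z: "Zfun (\<lambda>n. sum ?f (?S1 n - ?S2 n) * K) sequentially"
    by (rule Zfun_mult_left)
  have "Zfun (\<lambda>n. sum ?g (?S1 n - ?S2 n)) sequentially"
  proof (rule Zfun_le[OF Z], intro allI)
    fix n
    have "norm (sum ?g (?S1 n - ?S2 n)) \<le> (\<Sum>x\<in>?S1 n - ?S2 n. norm (?g x))" by (rule norm_sum)
    also have "\<dots> \<le> (\<Sum>x\<in>?S1 n - ?S2 n. ?f x * K)"
      by (intro sum_mono) (auto simp: K)
    also have "\<dots> = sum ?f (?S1 n - ?S2 n) * K" by (simp add: sum_distrib_right)
    also have "\<dots> \<le> norm (sum ?f (?S1 n - ?S2 n) * K)" by simp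
    finally show "norm (sum ?g (?S1 n - ?S2 n)) \<le> norm (sum ?f (?S1 n - ?S2 n) * K)" .
  qed
  then have 2: "(\<lambda>n. sum ?g (?S1 n) - sum ?g (?S2 n)) \<longlonglongrightarrow> 0"
    unfolding tendsto_Zfun_iff diff_0_right
    by (simp only: sum_diff finite_S1 S2_le_S1)
  with 1 have "(\<lambda>n. sum ?g (?S2 n)) \<longlonglongrightarrow> prod (\<Sum>k. a k) (\<Sum>k. b k)"
    by (rule Lim_transform2)
  then show ?thesis
    by (simp only: sums_def sum.triangle_reindex)
qed

section \<open>Binomial coefficients of the square root\<close>

definition sqc :: "nat \<Rightarrow> real" where
  "sqc n = ((1/2::real) gchoose n) * (-1) ^ n"

lemma sqc_0 [simp]: "sqc 0 = 1" by (simp add: sqc_def)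

lemma sqc_Suc: "sqc (Suc k) = (real k - 1/2) / (real k + 1) * sqc k"
proof -
  have "(1/2::real) * ((1/2) gchoose k) = of_nat k * ((1/2) gchoose k) + of_nat (Suc k) * ((1/2) gchoose (Suc k))"
    by (rule gbinomial_mult_1)
  then have g: "((1/2::real) gchoose (Suc k)) = (1/2 - real k) / (real k + 1) * ((1/2) gchoose k)"
    by (simp add: field_simps)
  have "sqc (Suc k) = ((1/2 - real k) / (real k + 1) * ((1/2) gchoose k)) * (- ((-1)^k))"
    by (simp add: sqc_def g)
  also have "\<dots> = (real k - 1/2) / (real k + 1) * sqc k"
    by (simp add: sqc_def field_simps)
  finally show ?thesis .
qed

lemma sqc_abs_le: "\<bar>sqc n\<bar> \<le> 1"
proof (induction n)
  case 0 then show ?case by simp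
next
  case (Suc k)
  have f: "\<bar>(real k - 1/2) / (real k + 1)\<bar> \<le> 1" by (simp add: abs_le_iff field_simps)
  have "\<bar>sqc (Suc k)\<bar> = \<bar>(real k - 1/2) / (real k + 1)\<bar> * \<bar>sqc k\<bar>" by (simp add: sqc_Suc abs_mult)
  also have "\<dots> \<le> 1 * 1" using f Suc by (intro mult_mono) auto
  finally show ?case by simp
qed

lemma sqc_nonpos: "n \<ge> 1 \<Longrightarrow> sqc n \<le> 0"
proof (induction n rule: dec_induct)
  case base then show ?case by (simp add: sqc_def)
next
  case (step k)
  have "0 \<le> (real k - 1/2) / (real k + 1)" using step(1) by simp
  then show ?case unfolding sqc_Suc by (rule mult_nonneg_nonpos[OF _ step(3)])
qed

lemma sqc_conv: "sqc i * sqc (k - i) = (-1)^k * (((1/2::real) gchoose i) * ((1/2) gchoose (k - i)))"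
  if "i \<le> k" for i k
proof -
  have "(-1::real)^i * (-1)^(k-i) = (-1)^k" using that by (simp flip: power_add)
  then show ?thesis by (simp add: sqc_def algebra_simps)
qed

lemma sqc_square: "(\<Sum>i\<le>k. sqc i * sqc (k - i)) = (if k = 0 then 1 else if k = 1 then -1 else 0)"
proof -
  have "(\<Sum>i\<le>k. sqc i * sqc (k - i)) = (-1)^k * (\<Sum>i=0..k. ((1/2::real) gchoose i) * ((1/2) gchoose (k - i)))"
    by (simp add: sqc_conv sum_distrib_left atLeast0AtMost)
  also have "\<dots> = (-1)^k * ((1::real) gchoose k)"
    using gbinomial_Vandermonde[of "1/2::real" "1/2" k] by simp
  also have "(1::real) gchoose k = real (1 choose k)"
    using binomial_gbinomial[of 1 k, where 'a=real] by simp
  finally show ?thesis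
    by (cases k) (auto simp: binomial_eq_0)
qed

lemma sqc_sums:
  assumes "0 \<le> q" "q < 1"
  shows "(\<lambda>n. sqc n * q ^ n) sums sqrt (1 - q)"
proof -
  have "\<bar>-q\<bar> < 1" using assms by simp
  from gen_binomial_real[OF this, of "1/2"]
  have "(\<lambda>n. ((1/2) gchoose n) * (-q)^n) sums (1 + - q) powr (1/2)" .
  moreover have "((1/2) gchoose n) * (-q)^n = sqc n * q ^ n" for n
    by (simp add: sqc_def power_minus' algebra_simps)
  moreover have "(1 + - q) powr (1/2) = sqrt (1 - q)" using assms by (simp add: powr_half_sqrt)
  ultimately show ?thesis by simp
qed


lemma norm_diff_sq: "(norm (a - c))\<^sup>2 = (norm a)\<^sup>2 + (norm c)\<^sup>2 - 2 * inner a (c::'a::real_inner)"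
  by (simp add: power2_norm_eq_inner inner_diff_left inner_diff_right inner_commute[of c a])

lemma bounded_linear_cinner_left: "bounded_linear (\<lambda>v::'a::chilbert_space. cinner v y)"
proof (rule bounded_linear_intro[where K="norm y"])
  fix v w show "cinner (v + w) y = cinner v y + cinner w y" by (rule cinner_add_left)
next
  fix r v show "cinner (r *\<^sub>R v) y = r *\<^sub>R cinner v y"
    by (simp add: cinner_scaleR_left scaleR_conv_of_real)
next
  fix v show "norm (cinner v y) \<le> norm v * norm y" by (simp add: norm_cinner)
qed

lemma sqrt_construct:
  fixes V :: "'a::chilbert_space \<Rightarrow> 'a"
  assumes V: "bounded_clinear V" and b: "b > 0" "\<And>x. b * norm x \<le> norm (V x)"
  defines "C \<equiv> cadjoint V \<circ> V"
  shows "\<exists>R. bounded_clinear R \<and> R \<circ> R = C \<and> cadjoint R = R \<and>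
            (\<exists>\<epsilon>>0. \<forall>y. \<epsilon> * (norm y)\<^sup>2 \<le> inner (R y) y) \<and>
            (\<forall>S. bounded_clinear S \<longrightarrow> S \<circ> C = C \<circ> S \<longrightarrow> S \<circ> R = R \<circ> S)"
proof -
  note G = gram_props[OF V b, folded C_def]
  have Cb: "bounded_clinear C" and Csa: "cadjoint C = C" and CV: "\<And>x. cinner (C x) x = cinner (V x) (V x)"
    using G by auto
  have Cap: "C x = cadjoint V (V x)" for x by (simp add: C_def)
  obtain K where K: "K > 0" "\<And>y. norm (cadjoint V y) \<le> norm y * K"
    using bcl_bound[OF bcl_cadjoint[OF V]] by blast
  obtain KC where KC: "KC > 0" "\<And>y. norm (C y) \<le> norm y * KC"
    using bcl_bound[OF Cb] by blast
  define N where "N = K\<^sup>2 + b\<^sup>2"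
  have K2: "0 < K\<^sup>2" using K(1) by simp
  have b2: "0 < b\<^sup>2" using b(1) by simp
  have N1: "N > 0" unfolding N_def by (rule add_pos_pos[OF K2 b2])
  have N2: "K\<^sup>2 \<le> N" unfolding N_def by simp
  have N3: "b\<^sup>2 \<le> N" unfolding N_def by simp
  note N = N1 N2 N3
  define X where "X = (\<lambda>x. x - (1/N) *\<^sub>R C x)"
  have Xb: "bounded_clinear X"
  proof (rule bcl_intro[where K="1 + KC / N"])
    fix x y show "X (x + y) = X x + X y" by (simp add: X_def bcl_add[OF Cb] algebra_simps)
  next
    fix c x show "X (scaleC c x) = scaleC c (X x)"
      by (simp add: X_def bcl_scaleC[OF Cb] scaleC_diff_right scaleC_scaleR_comm)
  next
    fix x
    have "norm (X x) \<le> norm x + norm ((1/N) *\<^sub>R C x)" unfolding X_def by (rule norm_triangle_ineq4)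
    also have "norm ((1/N) *\<^sub>R C x) = (1/N) * norm (C x)" using N by simp
    also have "(1/N) * norm (C x) \<le> (1/N) * (norm x * KC)" using N KC by (intro mult_left_mono) auto
    finally show "norm (X x) \<le> norm x * (1 + KC / N)" by (simp add: algebra_simps)
  qed
  have Xsa0: "cinner (X x) y = cinner x (X y)" for x y
    by (simp add: X_def cinner_diff_left cinner_diff_right cinner_scaleR_left cinner_scaleR_right
        cinner_selfadj[OF Cb Csa])
  have Xn_sa: "cinner ((X ^^ n) x) y = cinner x ((X ^^ n) y)" for n x y
  proof (induction n arbitrary: x y)
    case 0 then show ?case by simp
  next
    case (Suc n)
    have "cinner ((X ^^ Suc n) x) y = cinner (X ((X ^^ n) x)) y" by simp
    also have "\<dots> = cinner ((X ^^ n) x) (X y)" by (rule Xsa0)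
    also have "\<dots> = cinner x ((X ^^ n) (X y))" by (rule Suc)
    also have "(X ^^ n) (X y) = (X ^^ Suc n) y" by (simp add: funpow_swap1)
    finally show ?case .
  qed
  define q where "q = sqrt (1 - b\<^sup>2 / N)"
  have bN: "0 < b\<^sup>2 / N" "b\<^sup>2 / N \<le> 1" using N b by auto
  have q: "0 \<le> q" "q < 1" using bN by (auto simp: q_def)
  have q2: "q\<^sup>2 = 1 - b\<^sup>2 / N" using bN by (simp add: q_def)
  have Xq: "norm (X x) \<le> q * norm x" for x
  proof -
    define v where "v = (norm (V x))\<^sup>2"
    have ixc: "inner x (C x) = v"
      using arg_cong[OF CV[of x], of Re] by (simp add: v_def power2_norm_eq_inner inner_commute)
    have nc: "norm (C x) \<le> norm (V x) * K" unfolding Cap by (rule K(2))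
    have nc2: "(norm (C x))\<^sup>2 \<le> K\<^sup>2 * v"
    proof -
      have "(norm (C x))\<^sup>2 \<le> (norm (V x) * K)\<^sup>2" using nc by (intro power_mono) auto
      then show ?thesis by (simp add: v_def power_mult_distrib mult.commute)
    qed
    have vb: "b\<^sup>2 * (norm x)\<^sup>2 \<le> v"
    proof -
      have "(b * norm x)\<^sup>2 \<le> (norm (V x))\<^sup>2" using b by (intro power_mono) auto
      then show ?thesis by (simp add: v_def power_mult_distrib)
    qed
    have e0: "(norm (X x))\<^sup>2 = (norm x)\<^sup>2 + (norm ((1/N) *\<^sub>R C x))\<^sup>2 - 2 * inner x ((1/N) *\<^sub>R C x)"
      unfolding X_def by (rule norm_diff_sq)
    have e1: "(norm (X x))\<^sup>2 = (norm x)\<^sup>2 + (1/N)\<^sup>2 * (norm (C x))\<^sup>2 - 2 * ((1/N) * v)"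
      using e0 N by (simp add: ixc power_mult_distrib power_divide)
    have e2: "(1/N)\<^sup>2 * (norm (C x))\<^sup>2 \<le> (1/N)\<^sup>2 * (K\<^sup>2 * v)"
      using nc2 by (intro mult_left_mono) auto
    have e3: "(1/N)\<^sup>2 * (K\<^sup>2 * v) \<le> (1/N) * v"
    proof -
      have "(1/N)\<^sup>2 * (K\<^sup>2 * v) = (1/N) * v * (K\<^sup>2 / N)" using N by (simp add: power2_eq_square field_simps)
      also have "\<dots> \<le> (1/N) * v * 1"
        using N by (intro mult_left_mono) (auto simp: v_def)
      finally show ?thesis by simp
    qed
    have e4: "(1/N) * (b\<^sup>2 * (norm x)\<^sup>2) \<le> (1/N) * v" using vb N by (intro mult_left_mono) auto
    have e5: "(norm x)\<^sup>2 - (1/N) * (b\<^sup>2 * (norm x)\<^sup>2) = (q * norm x)\<^sup>2"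
    proof -
      have "(norm x)\<^sup>2 - (1/N) * (b\<^sup>2 * (norm x)\<^sup>2) = (1 - b\<^sup>2 / N) * (norm x)\<^sup>2" by (simp add: algebra_simps)
      also have "\<dots> = (q * norm x)\<^sup>2" by (simp only: q2 power_mult_distrib)
      finally show ?thesis .
    qed
    have ar: "P \<le> Q" if "P = A + B - 2 * W" "B \<le> B'" "B' \<le> W" "Z \<le> W" "A - Z = Q"
      for P A B B' W Z Q :: real using that by linarith
    have "(norm (X x))\<^sup>2 \<le> (q * norm x)\<^sup>2" by (rule ar[OF e1 e2 e3 e4 e5])
    then show ?thesis by (rule power2_le_imp_le) (use q in simp)
  qed
  have Xn: "norm ((X ^^ n) x) \<le> q ^ n * norm x" for n x
  proof (induction n)
    case 0 then show ?case by simp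
  next
    case (Suc n)
    have "norm ((X ^^ Suc n) x) = norm (X ((X ^^ n) x))" by simp
    also have "\<dots> \<le> q * norm ((X ^^ n) x)" by (rule Xq)
    also have "\<dots> \<le> q * (q ^ n * norm x)" using Suc.IH q(1) by (intro mult_left_mono) simp_all
    finally show ?case by simp
  qed
  have Xnb: "bounded_clinear (X ^^ n)" for n by (rule bcl_funpow[OF Xb])
  define bX where "bX n = Blinfun (X ^^ n)" for n
  have bXa: "blinfun_apply (bX n) = X ^^ n" for n
    unfolding bX_def by (rule bounded_linear_Blinfun_apply[OF bcl_linear[OF Xnb]])
  have nbX: "norm (bX n) \<le> q ^ n" for n
  proof (rule norm_blinfun_bound)
    show "0 \<le> q ^ n" using q by simp
    fix x show "norm (blinfun_apply (bX n) x) \<le> q ^ n * norm x" by (simp only: bXa) (rule Xn)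
  qed
  define u where "u n = sqc n *\<^sub>R bX n" for n
  have nu: "norm (u n) \<le> q ^ n" for n
  proof -
    have "norm (u n) = \<bar>sqc n\<bar> * norm (bX n)" by (simp add: u_def)
    also have "\<dots> \<le> 1 * q ^ n" using sqc_abs_le nbX by (intro mult_mono) auto
    finally show ?thesis by simp
  qed
  have su: "summable (\<lambda>n. norm (u n))"
    by (rule summable_comparison_test[OF _ summable_geometric[of q]]) (use nu q in auto)
  have su': "summable u" using su by (rule summable_norm_cancel)
  define Sb where "Sb = suminf u"
  have Sb_sums: "(\<lambda>n. sqc n *\<^sub>R (X ^^ n) x) sums blinfun_apply Sb x" for x
  proof -
    have "(\<lambda>n. blinfun_apply (u n) x) sums blinfun_apply Sb x"
      unfolding Sb_def by (rule bounded_linear.sums[OF blinfun.bounded_linear_left summable_sums[OF su']])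
    then show ?thesis by (simp add: u_def bXa blinfun.scaleR_left)
  qed
  have Sb_eq: "blinfun_apply Sb x = (\<Sum>n. sqc n *\<^sub>R (X ^^ n) x)" for x
    using Sb_sums[of x] by (simp add: sums_iff)
  have comp_u: "u i o\<^sub>L u j = (sqc i * sqc j) *\<^sub>R bX (i + j)" for i j
    by (rule blinfun_eqI) (simp add: u_def bXa bcl_scaleR[OF Xnb] funpow_add blinfun.scaleR_left)
  have "(\<lambda>k. \<Sum>i\<le>k. u i o\<^sub>L u (k - i)) sums (Sb o\<^sub>L Sb)"
    unfolding Sb_def by (rule Cauchy_product_sums_bilinear[OF bounded_bilinear_blinfun_compose su su])
  moreover have "(\<Sum>i\<le>k. u i o\<^sub>L u (k - i)) = (if k = 0 then 1 else if k = 1 then -1 else 0) *\<^sub>R bX k" for k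
  proof -
    have "(\<Sum>i\<le>k. u i o\<^sub>L u (k - i)) = (\<Sum>i\<le>k. (sqc i * sqc (k - i)) *\<^sub>R bX k)"
      by (intro sum.cong refl) (simp add: comp_u)
    also have "\<dots> = (\<Sum>i\<le>k. sqc i * sqc (k - i)) *\<^sub>R bX k" by (simp add: scaleR_sum_left)
    finally show ?thesis by (simp add: sqc_square)
  qed
  ultimately have sq_sums: "(\<lambda>k. (if k = 0 then 1 else if k = 1 then -1 else 0) *\<^sub>R bX k) sums (Sb o\<^sub>L Sb)"
    by simp
  have "(\<lambda>k. (if k = 0 then 1 else if k = 1 then -1 else 0) *\<^sub>R bX k) sums
        (\<Sum>k\<in>{0,1}. (if k = 0 then 1 else if k = 1 then -1 else 0) *\<^sub>R bX k)"
    by (rule sums_finite) auto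
  then have s3: "(\<lambda>k. (if k = 0 then 1 else if k = 1 then -1 else 0) *\<^sub>R bX k) sums (bX 0 - bX 1)"
    by simp
  have sqeq: "Sb o\<^sub>L Sb = bX 0 - bX 1" by (rule sums_unique2[OF sq_sums s3])
  have SbSb: "blinfun_apply Sb (blinfun_apply Sb x) = (1/N) *\<^sub>R C x" for x
  proof -
    have "blinfun_apply Sb (blinfun_apply Sb x) = blinfun_apply (Sb o\<^sub>L Sb) x" by simp
    also have "\<dots> = blinfun_apply (bX 0 - bX 1) x" by (simp only: sqeq)
    also have "\<dots> = x - X x" by (simp add: blinfun.diff_left bXa)
    also have "\<dots> = (1/N) *\<^sub>R C x" by (simp add: X_def)
    finally show ?thesis .
  qed
  define R where "R x = sqrt N *\<^sub>R blinfun_apply Sb x" for x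
  have RR: "R \<circ> R = C"
  proof
    fix x
    have "(R \<circ> R) x = (sqrt N * sqrt N) *\<^sub>R blinfun_apply Sb (blinfun_apply Sb x)"
      by (simp add: R_def blinfun.scaleR_right)
    also have "\<dots> = C x" using N by (simp add: SbSb)
    finally show "(R \<circ> R) x = C x" .
  qed
  have Sb_scaleC: "blinfun_apply Sb (scaleC z x) = scaleC z (blinfun_apply Sb x)" for z x
  proof -
    have "(\<lambda>n. scaleC z (sqc n *\<^sub>R (X ^^ n) x)) sums scaleC z (blinfun_apply Sb x)"
      by (rule bounded_linear.sums[OF bounded_linear_scaleC Sb_sums])
    moreover have "scaleC z (sqc n *\<^sub>R (X ^^ n) x) = sqc n *\<^sub>R (X ^^ n) (scaleC z x)" for n
      by (simp add: bcl_scaleC[OF Xnb] scaleC_scaleR_comm)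
    ultimately have "(\<lambda>n. sqc n *\<^sub>R (X ^^ n) (scaleC z x)) sums scaleC z (blinfun_apply Sb x)" by simp
    then show ?thesis by (rule sums_unique2[OF Sb_sums[of "scaleC z x"]])
  qed
  have Rb: "bounded_clinear R"
    unfolding bounded_clinear_def
  proof
    show "bounded_linear R" unfolding R_def
      by (intro bounded_linear_compose[OF bounded_linear_scaleR_right blinfun.bounded_linear_right])
    show "\<forall>c x. R (scaleC c x) = scaleC c (R x)"
      by (simp add: R_def Sb_scaleC scaleC_scaleR_comm)
  qed
  have Sb_sa: "cinner (blinfun_apply Sb x) y = cinner x (blinfun_apply Sb y)" for x y
  proof -
    have s1: "(\<lambda>n. cinner (sqc n *\<^sub>R (X ^^ n) x) y) sums cinner (blinfun_apply Sb x) y"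
      by (rule bounded_linear.sums[OF bounded_linear_cinner_left Sb_sums])
    have "(\<lambda>n. cinner (sqc n *\<^sub>R (X ^^ n) y) x) sums cinner (blinfun_apply Sb y) x"
      by (rule bounded_linear.sums[OF bounded_linear_cinner_left Sb_sums])
    then have "(\<lambda>n. cnj (cinner (sqc n *\<^sub>R (X ^^ n) y) x)) sums cnj (cinner (blinfun_apply Sb y) x)"
      by (simp only: sums_cnj)
    moreover have "cnj (cinner (sqc n *\<^sub>R (X ^^ n) y) x) = cinner (sqc n *\<^sub>R (X ^^ n) x) y" for n
      by (simp add: cnj_cinner cinner_scaleR_left cinner_scaleR_right Xn_sa)
    ultimately have "(\<lambda>n. cinner (sqc n *\<^sub>R (X ^^ n) x) y) sums cinner x (blinfun_apply Sb y)"
      by (simp add: cnj_cinner)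
    from sums_unique2[OF s1 this] show ?thesis .
  qed
  have Rsa: "cadjoint R = R"
    by (rule cadjoint_unique[OF Rb]) (simp add: R_def cinner_scaleR_left cinner_scaleR_right Sb_sa)
  have Rpos: "sqrt N * sqrt (1 - q) * (norm y)\<^sup>2 \<le> inner (R y) y" for y
  proof -
    have s1: "(\<lambda>n. inner (sqc n *\<^sub>R (X ^^ n) y) y) sums inner (blinfun_apply Sb y) y"
      by (rule bounded_linear.sums[OF bounded_linear_inner_left Sb_sums])
    have s2: "(\<lambda>n. sqc n * q ^ n * (norm y)\<^sup>2) sums (sqrt (1 - q) * (norm y)\<^sup>2)"
      by (rule sums_mult2[OF sqc_sums[OF q]])
    have le: "sqc n * q ^ n * (norm y)\<^sup>2 \<le> inner (sqc n *\<^sub>R (X ^^ n) y) y" for n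
    proof (cases "n = 0")
      case True then show ?thesis by (simp add: power2_norm_eq_inner)
    next
      case False
      then have neg: "sqc n \<le> 0" by (intro sqc_nonpos) simp
      have "inner ((X ^^ n) y) y \<le> norm ((X ^^ n) y) * norm y" by (rule norm_cauchy_schwarz)
      also have "\<dots> \<le> q ^ n * norm y * norm y" by (intro mult_right_mono Xn) auto
      finally have "inner ((X ^^ n) y) y \<le> q ^ n * (norm y)\<^sup>2" by (simp add: power2_eq_square mult.assoc)
      then have "sqc n * (q ^ n * (norm y)\<^sup>2) \<le> sqc n * inner ((X ^^ n) y) y"
        using neg by (rule mult_left_mono_neg)
      then show ?thesis by (simp add: mult.assoc)
    qed
    have "sqrt (1 - q) * (norm y)\<^sup>2 \<le> inner (blinfun_apply Sb y) y" by (rule sums_le[OF le s2 s1])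
    then have "sqrt N * (sqrt (1 - q) * (norm y)\<^sup>2) \<le> sqrt N * inner (blinfun_apply Sb y) y"
      using N(1) by (intro mult_left_mono) auto
    then show ?thesis by (simp add: R_def mult.assoc)
  qed
  have eps: "sqrt N * sqrt (1 - q) > 0" using N q by simp
  have comm: "S \<circ> R = R \<circ> S" if S: "bounded_clinear S" and SC: "S \<circ> C = C \<circ> S" for S
  proof
    fix x
    have SCx: "S (C y) = C (S y)" for y using fun_cong[OF SC, of y] by simp
    have SX: "S (X y) = X (S y)" for y by (simp add: X_def bcl_diff[OF S] bcl_scaleR[OF S] SCx)
    have SXn: "S ((X ^^ n) y) = (X ^^ n) (S y)" for n y
      by (induction n) (simp_all add: SX)
    have "(\<lambda>n. S (sqc n *\<^sub>R (X ^^ n) x)) sums S (blinfun_apply Sb x)"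
      by (rule bounded_linear.sums[OF bcl_linear[OF S] Sb_sums])
    moreover have "S (sqc n *\<^sub>R (X ^^ n) x) = sqc n *\<^sub>R (X ^^ n) (S x)" for n
      by (simp add: bcl_scaleR[OF S] SXn)
    ultimately have "(\<lambda>n. sqc n *\<^sub>R (X ^^ n) (S x)) sums S (blinfun_apply Sb x)" by simp
    from sums_unique2[OF this Sb_sums[of "S x"]]
    have "S (blinfun_apply Sb x) = blinfun_apply Sb (S x)" .
    then show "(S \<circ> R) x = (R \<circ> S) x" by (simp add: R_def bcl_scaleR[OF S])
  qed
  have ex: "\<exists>\<epsilon>>0. \<forall>y. \<epsilon> * (norm y)\<^sup>2 \<le> inner (R y) y" using eps Rpos by blast
  show ?thesis
    by (rule exI[of _ R]) (intro conjI Rb RR Rsa ex allI impI comm)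
qed


lemma positive_opI:
  fixes R :: "'a::chilbert_space \<Rightarrow> 'a"
  assumes R: "bounded_clinear R" "cadjoint R = R" and pos: "\<And>y. 0 \<le> inner (R y) y"
  shows "positive_op R"
  unfolding positive_op_def
proof
  fix x
  have "cinner (R x) x = cinner x (R x)" by (rule cinner_selfadj[OF R])
  also have "\<dots> = cnj (cinner (R x) x)" by (simp add: cnj_cinner)
  finally have "Im (cinner (R x) x) = 0" by (metis cnj.sel(2) neg_equal_zero)
  then show "0 \<le> cinner (R x) x" using pos[of x] by (simp add: less_eq_complex_def)
qed

lemma op_sqrt_props:
  fixes V :: "'a::chilbert_space \<Rightarrow> 'a"
  assumes V: "bounded_clinear V" and b: "b > 0" "\<And>x. b * norm x \<le> norm (V x)"
  defines "C \<equiv> cadjoint V \<circ> V"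
  shows "bounded_clinear (op_sqrt C) \<and> op_sqrt C \<circ> op_sqrt C = C \<and> cadjoint (op_sqrt C) = op_sqrt C
         \<and> (\<exists>\<epsilon>>0. \<forall>y. \<epsilon> * (norm y)\<^sup>2 \<le> inner (op_sqrt C y) y)"
proof -
  obtain R where Rb: "bounded_clinear R" and RR: "R \<circ> R = C" and Rsa: "cadjoint R = R"
    and eps: "\<exists>\<epsilon>>0. \<forall>y. \<epsilon> * (norm y)\<^sup>2 \<le> inner (R y) y"
    and comm: "\<And>S. bounded_clinear S \<Longrightarrow> S \<circ> C = C \<circ> S \<Longrightarrow> S \<circ> R = R \<circ> S"
    using sqrt_construct[OF V b, folded C_def] by blast
  obtain \<epsilon> where e: "\<epsilon> > 0" "\<And>y. \<epsilon> * (norm y)\<^sup>2 \<le> inner (R y) y" using eps by blast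
  have Rpos: "positive_op R"
    by (rule positive_opI[OF Rb Rsa]) (use e in \<open>meson dual_order.trans mult_nonneg_nonneg less_imp_le zero_le_power2\<close>)
  have "op_sqrt C = R"
    unfolding op_sqrt_def
  proof (rule the_equality)
    show "bounded_clinear R \<and> positive_op R \<and> R \<circ> R = C" using Rb Rpos RR by blast
    fix S assume S: "bounded_clinear S \<and> positive_op S \<and> S \<circ> S = C"
    then have Sb: "bounded_clinear S" and Spos: "positive_op S" and SS: "S \<circ> S = C" by auto
    have "S \<circ> C = C \<circ> S" unfolding SS[symmetric] by (simp add: comp_assoc)
    then have SR: "S \<circ> R = R \<circ> S" by (rule comm[OF Sb])
    show "S = R"
    proof
      fix x
      define y where "y = S x - R x"
      have SSx: "S (S x) = C x" using fun_cong[OF SS, of x] by simp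
      have RRx: "R (R x) = C x" using fun_cong[OF RR, of x] by simp
      have SRx: "S (R x) = R (S x)" using fun_cong[OF SR, of x] by simp
      have "S y + R y = 0"
        by (simp add: y_def bcl_diff[OF Sb] bcl_diff[OF Rb] SSx RRx SRx)
      then have Sy: "S y = - R y" by (simp add: eq_neg_iff_add_eq_0)
      have "0 \<le> Re (cinner (S y) y)" using Spos by (simp add: positive_op_def less_eq_complex_def)
      then have "inner (R y) y \<le> 0" by (simp add: Sy)
      then have "\<epsilon> * (norm y)\<^sup>2 \<le> 0" using e(2)[of y] by simp
      then have "y = 0" using e(1) by (simp add: mult_le_0_iff)
      then show "S x = R x" by (simp add: y_def)
    qed
  qed
  then show ?thesis using Rb RR Rsa eps by simp
qed

lemma op_sqrt_props2:
  fixes V :: "'a::chilbert_space \<Rightarrow> 'a"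
  assumes V: "bounded_clinear V" and b: "b > 0" "\<And>x. b * norm x \<le> norm (V x)"
  defines "C \<equiv> cadjoint V \<circ> V"
  defines "R \<equiv> op_sqrt C"
  shows "bounded_clinear R" "\<And>x. R (R x) = C x" "cadjoint R = R"
    "bounded_clinear (inv R)" "cadjoint (inv R) = inv R" "\<And>x. R (inv R x) = x" "\<And>x. inv R (R x) = x"
    "\<And>w. inv R (inv R w) = inv C w"
proof -
  have P: "bounded_clinear R \<and> R \<circ> R = C \<and> cadjoint R = R \<and> (\<exists>\<epsilon>>0. \<forall>y. \<epsilon> * (norm y)\<^sup>2 \<le> inner (R y) y)"
    unfolding R_def C_def by (rule op_sqrt_props[OF V b])
  then show Rb: "bounded_clinear R" and Rsa: "cadjoint R = R" by auto
  show RR: "R (R x) = C x" for x using P by (metis comp_apply)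
  obtain \<epsilon> where e: "\<epsilon> > 0" "\<And>y. \<epsilon> * (norm y)\<^sup>2 \<le> inner (R y) y" using P by blast
  have lb: "\<epsilon> * norm y \<le> norm (R y)" for y
  proof -
    have "\<epsilon> * (norm y)\<^sup>2 \<le> norm (R y) * norm y"
      using e(2)[of y] norm_cauchy_schwarz[of "R y" y] by linarith
    then have "(\<epsilon> * norm y) * norm y \<le> norm (R y) * norm y" by (simp add: power2_eq_square mult.assoc)
    then show ?thesis by (cases "norm y = 0") (auto simp: mult_le_cancel_right)
  qed
  note G = gram_props[OF V b, folded C_def]
  have Cbij: "bij C" using G by blast
  have inj: "inj R"
  proof (rule injI)
    fix x y assume "R x = R y"
    then have "R (x - y) = 0" by (simp add: bcl_diff[OF Rb])
    then have "\<epsilon> * norm (x - y) \<le> 0" using lb[of "x - y"] by simp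
    then show "x = y" using e(1) by (simp add: mult_le_0_iff)
  qed
  have surj: "surj R"
  proof -
    have "z \<in> range R" for z
    proof -
      obtain w where "z = C w" using Cbij by (metis bij_pointE)
      then have "z = R (R w)" by (simp add: RR)
      then show ?thesis by blast
    qed
    then show ?thesis by blast
  qed
  have Rbij: "bij R" using inj surj by (simp add: bij_def)
  show RI: "R (inv R x) = x" for x using surj by (simp add: surj_f_inv_f)
  show IR: "inv R (R x) = x" for x using inj by (simp add: inv_f_f)
  show Ib: "bounded_clinear (inv R)" by (rule inv_bcl[OF Rb Rbij e(1) lb])
  show "cadjoint (inv R) = inv R" by (rule inv_selfadj[OF Rb Rbij Rsa Ib])
  show "inv R (inv R w) = inv C w" for w
  proof -
    have "C (inv R (inv R w)) = w" by (simp add: RR[symmetric] RI)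
    then show ?thesis using Cbij by (metis bij_inv_eq_iff)
  qed
qed




theorem proposition7p7:
  fixes T :: "'a::chilbert_space \<Rightarrow> 'a"
  assumes "bounded_clinear T" and "left_invertible T"
  defines "T' \<equiv> cauchy_dual T"
    and "C \<equiv> (\<lambda>k::nat. (cadjoint (cauchy_dual T) ^^ k) \<circ> (cauchy_dual T ^^ k))"
    and "Hu \<equiv> (\<Inter>n. range (cauchy_dual T ^^ n))"
    and "P \<equiv> orth_proj (\<Inter>n. range (cauchy_dual T ^^ n))"
  shows "(\<forall>h. (\<lambda>k. ((T' ^^ (k+1)) \<circ> inv (C k) \<circ> (cadjoint T' ^^ (k+1))) h)
                  \<longlonglongrightarrow> (P \<circ> T' \<circ> P \<circ> cadjoint T' \<circ> P) h)
      \<and> bounded_clinear (P \<circ> T' \<circ> P \<circ> cadjoint T' \<circ> P)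
      \<and> positive_op (P \<circ> T' \<circ> P \<circ> cadjoint T' \<circ> P)
      \<and> (\<forall>h. (\<lambda>k. ((T' ^^ k) \<circ> inv (C k) \<circ> C (k+1) \<circ> inv (C k) \<circ> (cadjoint T' ^^ k)) h)
                  \<longlonglongrightarrow> (P \<circ> inv (cadjoint T \<circ> T) \<circ> P) h)
      \<and> bounded_clinear (P \<circ> inv (cadjoint T \<circ> T) \<circ> P)
      \<and> positive_op (P \<circ> inv (cadjoint T \<circ> T) \<circ> P)
      \<and> (hyponormal_on Hu T' \<longleftrightarrow>
           op_le (P \<circ> T' \<circ> P \<circ> cadjoint T' \<circ> P) (P \<circ> inv (cadjoint T \<circ> T) \<circ> P))
      \<and> (hyponormal_on Hu T' \<longleftrightarrow>
           (\<forall>h. lim (\<lambda>k. (norm ((cadjoint (op_sqrt (C k) \<circ> T' \<circ> inv (op_sqrt (C k))) \<circ>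
                                  inv (op_sqrt (C k)) \<circ> (cadjoint T' ^^ k)) h))\<^sup>2)
              \<le> lim (\<lambda>k. (norm ((op_sqrt (C k) \<circ> T' \<circ> inv (op_sqrt (C k)) \<circ>
                                  inv (op_sqrt (C k)) \<circ> (cadjoint T' ^^ k)) h))\<^sup>2)))
      \<and> (hyponormal_on Hu T' \<longleftrightarrow>
           positive_op (P \<circ> (\<lambda>h. inv (cadjoint T \<circ> T) h - (T' \<circ> P \<circ> cadjoint T') h) \<circ> P))"
proof -
  have Tb: "bounded_clinear T" by (rule assms(1))
  have T'def: "T' = cauchy_dual T" by (simp add: assms(3))
  have Cdef: "C = (\<lambda>k::nat. (cadjoint T' ^^ k) \<circ> (T' ^^ k))" by (simp add: assms(4) T'def)
  have Hudef: "Hu = (\<Inter>n. range (T' ^^ n))" by (simp add: assms(5) T'def)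
  have Pdef: "P = orth_proj Hu" by (simp add: assms(6) Hudef T'def)
  define G where "G = cadjoint T \<circ> T"
  obtain bT where bT: "bT > 0" "\<And>x. bT * norm x \<le> norm (T x)"
    using bounded_below_left_inv[OF Tb assms(2)] by blast
  note GP = gram_props[OF Tb bT, folded G_def]
  have Gb: "bounded_clinear G" and Gsa: "cadjoint G = G" and Glb: "\<And>x. bT\<^sup>2 * norm x \<le> norm (G x)"
    and Gbij: "bij G" using GP by auto
  have GI: "G (inv G x) = x" for x using Gbij by (simp add: bij_is_surj surj_f_inv_f)
  have IG: "inv G (G x) = x" for x using Gbij by (simp add: bij_is_inj inv_f_f)
  have bT2: "bT\<^sup>2 > 0" using bT by simp
  have Ib: "bounded_clinear (inv G)" by (rule inv_bcl[OF Gb Gbij bT2 Glb])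
  have Isa: "cadjoint (inv G) = inv G" by (rule inv_selfadj[OF Gb Gbij Gsa Ib])
  have T'eq: "T' = T \<circ> inv G" by (simp add: T'def cauchy_dual_def G_def)
  have T'b: "bounded_clinear T'" unfolding T'eq by (rule bcl_comp[OF Tb Ib])
  define T's where "T's = cadjoint T'"
  have T'sb: "bounded_clinear T's" unfolding T's_def by (rule bcl_cadjoint[OF T'b])
  have T'seq: "T's = inv G \<circ> cadjoint T"
    unfolding T's_def T'eq by (simp add: cadjoint_comp[OF Tb Ib] Isa)
  have Gap: "cadjoint T (T y) = G y" for y by (simp add: G_def)
  have T'sT': "T's (T' x) = inv G x" for x
    by (simp add: T'seq T'eq Gap GI)
  have TsT': "cadjoint T (T' x) = x" for x
    by (simp add: T'eq Gap GI)
  have T'li: "left_invertible T'"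
    unfolding left_invertible_def
    by (intro exI[of _ "cadjoint T"]) (simp add: bcl_cadjoint[OF Tb] fun_eq_iff TsT')
  have Vb: "bounded_clinear (T' ^^ k)" for k by (rule bcl_funpow[OF T'b])
  have Vbb: "\<exists>b>0. \<forall>x. b * norm x \<le> norm ((T' ^^ k) x)" for k
    by (rule bounded_below_left_inv[OF Vb left_inv_funpow[OF T'li]])
  have Vadj: "cadjoint (T' ^^ k) = T's ^^ k" for k
    unfolding T's_def by (rule cadjoint_funpow[OF T'b])
  have Ck: "C k = cadjoint (T' ^^ k) \<circ> T' ^^ k" for k by (simp add: Cdef Vadj T's_def)
  have Cprops: "bij (C k) \<and> bounded_clinear (inv (C k)) \<and> cadjoint (inv (C k)) = inv (C k)
      \<and> (\<forall>x. C k (inv (C k) x) = x) \<and> (\<forall>x. inv (C k) (C k x) = x) \<and> bounded_clinear (C k)" for k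
  proof -
    obtain b where b: "b > 0" "\<And>x. b * norm x \<le> norm ((T' ^^ k) x)" using Vbb[of k] by blast
    note GPk = gram_props[OF Vb b, folded Ck]
    have bij: "bij (C k)" using GPk by blast
    have b2: "b\<^sup>2 > 0" using b by simp
    have ib: "bounded_clinear (inv (C k))" by (rule inv_bcl) (use GPk b2 in auto)
    moreover have "cadjoint (inv (C k)) = inv (C k)" by (rule inv_selfadj) (use GPk ib in auto)
    ultimately show ?thesis using bij GPk
      by (simp add: bij_is_surj surj_f_inv_f bij_is_inj inv_f_f)
  qed
  have Cbij: "bij (C k)" and CIb: "bounded_clinear (inv (C k))" and CIsa: "cadjoint (inv (C k)) = inv (C k)"
    and CI: "C k (inv (C k) x) = x" and IC: "inv (C k) (C k x) = x" and Cb: "bounded_clinear (C k)"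
    for k x using Cprops[of k] by auto
  define Q where "Q k = T' ^^ k \<circ> inv (C k) \<circ> cadjoint (T' ^^ k)" for k
  have Qb: "bounded_clinear (Q k)" for k
    unfolding Q_def by (intro bcl_comp Vb CIb bcl_cadjoint)
  have Qrange: "Q k h \<in> range (T' ^^ k)" for k h by (simp add: Q_def)
  have Qorth: "cinner (h - Q k h) m = 0" if "m \<in> range (T' ^^ k)" for k h m
  proof -
    obtain b where b: "b > 0" "\<And>x. b * norm x \<le> norm ((T' ^^ k) x)" using Vbb[of k] by blast
    show ?thesis using gram_proj(2)[OF Vb b that, of h] by (simp add: Q_def Ck)
  qed
  have Qnorm: "norm (Q k z) \<le> norm z" for k z
  proof -
    have "inner (z - Q k z) (Q k z) = 0"
      using Qorth[OF Qrange, of z k z] by (metis Re_cinner zero_complex.simps(1))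
    then have "(norm z)\<^sup>2 = (norm (Q k z))\<^sup>2 + (norm (z - Q k z))\<^sup>2"
      using norm_add_sq[of "Q k z" "z - Q k z"] by (simp add: inner_commute)
    then have "(norm (Q k z))\<^sup>2 \<le> (norm z)\<^sup>2" by simp
    then show ?thesis by (rule power2_le_imp_le) simp
  qed
  have Mdec: "range (T' ^^ Suc k) \<subseteq> range (T' ^^ k)" for k
    by (auto simp: funpow_swap1)
  have Mcl: "closed (range (T' ^^ k))" for k
  proof -
    obtain b where b: "b > 0" "\<And>x. b * norm x \<le> norm ((T' ^^ k) x)" using Vbb[of k] by blast
    show ?thesis by (rule closed_range_bb[OF Vb b])
  qed
  have HuI: "x \<in> Hu \<longleftrightarrow> (\<forall>n. x \<in> range (T' ^^ n))" for x by (simp add: Hudef)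
  have Hu_diff: "x - y \<in> Hu" if xy: "x \<in> Hu" "y \<in> Hu" for x y
  proof -
    have "x - y \<in> range (T' ^^ n)" for n
    proof -
      obtain u w where "x = (T' ^^ n) u" "y = (T' ^^ n) w" using xy HuI by blast
      then have "x - y = (T' ^^ n) (u - w)" by (simp add: bcl_diff[OF Vb])
      then show ?thesis by blast
    qed
    then show ?thesis using HuI by blast
  qed
  have Hu_add: "x + y \<in> Hu" if xy: "x \<in> Hu" "y \<in> Hu" for x y
  proof -
    have "x + y \<in> range (T' ^^ n)" for n
    proof -
      obtain u w where "x = (T' ^^ n) u" "y = (T' ^^ n) w" using xy HuI by blast
      then have "x + y = (T' ^^ n) (u + w)" by (simp add: bcl_add[OF Vb])
      then show ?thesis by blast
    qed
    then show ?thesis using HuI by blast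
  qed
  have Hu_scale: "scaleC c x \<in> Hu" if xh: "x \<in> Hu" for c x
  proof -
    have "scaleC c x \<in> range (T' ^^ n)" for n
    proof -
      obtain u where "x = (T' ^^ n) u" using xh HuI by blast
      then have "scaleC c x = (T' ^^ n) (scaleC c u)" by (simp add: bcl_scaleC[OF Vb])
      then show ?thesis by blast
    qed
    then show ?thesis using HuI by blast
  qed
  have Hu0: "0 \<in> Hu" unfolding HuI
    by (intro allI range_eqI[of _ _ 0]) (simp add: bcl_zero[OF Vb])
  have Pchar: "P x = p" if "p \<in> Hu" "\<forall>m\<in>Hu. cinner (x - p) m = 0" for x p
    unfolding Pdef by (rule orth_proj_eqI[OF Hu_diff that])
  have Plim: "(\<lambda>k. Q k h) \<longlonglongrightarrow> P h \<and> P h \<in> Hu \<and> (\<forall>m\<in>Hu. cinner (h - P h) m = 0)" for h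
  proof -
    obtain L where L: "(\<lambda>k. Q k h) \<longlonglongrightarrow> L" "L \<in> (\<Inter>k. range (T' ^^ k))"
      "\<forall>m\<in>(\<Inter>k. range (T' ^^ k)). cinner (h - L) m = 0"
      using decreasing_proj_limit[of "\<lambda>k. range (T' ^^ k)" Q h, OF Mdec Mcl Qrange Qorth] by blast
    then have LHu: "L \<in> Hu" and Lo: "\<forall>m\<in>Hu. cinner (h - L) m = 0" by (simp_all add: Hudef)
    have "P h = L" by (rule Pchar[OF LHu Lo])
    then show ?thesis using L(1) LHu Lo by simp
  qed
  have PQ: "(\<lambda>k. Q k h) \<longlonglongrightarrow> P h" and PHu: "P h \<in> Hu" and Porth: "m \<in> Hu \<Longrightarrow> cinner (h - P h) m = 0"
    for h m using Plim[of h] by auto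
  have Pid: "P m = m" if "m \<in> Hu" for m by (rule Pchar[OF that]) simp
  have Pidem: "P (P x) = P x" for x by (rule Pid[OF PHu])
  have Porth': "cinner m (h - P h) = 0" if mh: "m \<in> Hu" for h m
  proof -
    have "cinner m (h - P h) = cnj (cinner (h - P h) m)" by (simp add: cnj_cinner)
    then show ?thesis by (simp add: Porth[OF mh])
  qed
  have Psa: "cinner (P x) y = cinner x (P y)" for x y
  proof -
    have a: "cinner (P x) y = cinner (P x) (P y)"
      using Porth'[OF PHu[of x], of y] by (simp add: cinner_diff_right)
    have b: "cinner x (P y) = cinner (P x) (P y)"
      using Porth[OF PHu[of y], of x] by (simp add: cinner_diff_left)
    show ?thesis by (simp only: a b)
  qed
  have Pb: "bounded_clinear P"
  proof (rule bcl_intro[where K=1])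
    fix x y show "P (x + y) = P x + P y"
    proof (rule Pchar)
      show "P x + P y \<in> Hu" by (rule Hu_add[OF PHu PHu])
      have e: "(x + y) - (P x + P y) = (x - P x) + (y - P y)" by (simp add: algebra_simps)
      show "\<forall>m\<in>Hu. cinner ((x + y) - (P x + P y)) m = 0"
        unfolding e by (simp add: cinner_add_left Porth)
    qed
  next
    fix c x show "P (scaleC c x) = scaleC c (P x)"
    proof (rule Pchar)
      show "scaleC c (P x) \<in> Hu" by (rule Hu_scale[OF PHu])
      show "\<forall>m\<in>Hu. cinner (scaleC c x - scaleC c (P x)) m = 0"
        by (simp add: scaleC_diff_right[symmetric] cinner_scaleC_left Porth)
    qed
  next
    fix x
    have "inner (x - P x) (P x) = 0"
      using arg_cong[OF Porth[OF PHu[of x], of x], of Re] by simp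
    then have i0: "inner (P x) (x - P x) = 0" by (simp only: inner_commute)
    have "(norm (P x + (x - P x)))\<^sup>2 = (norm (P x))\<^sup>2 + (norm (x - P x))\<^sup>2 + 2 * inner (P x) (x - P x)"
      by (rule norm_add_sq)
    then have "(norm x)\<^sup>2 = (norm (P x))\<^sup>2 + (norm (x - P x))\<^sup>2" by (simp only: i0) simp
    then have "(norm (P x))\<^sup>2 \<le> (norm x)\<^sup>2" by simp
    then show "norm (P x) \<le> norm x * 1" using power2_le_imp_le[of "norm (P x)" "norm x"] by simp
  qed
  have Tinv: "T' m \<in> Hu" if mh: "m \<in> Hu" for m
  proof -
    have "T' m \<in> range (T' ^^ n)" for n
    proof -
      obtain u where "m = (T' ^^ n) u" using mh HuI by blast
      then have "T' m = (T' ^^ n) (T' u)" by (simp add: funpow_swap1)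
      then show ?thesis by blast
    qed
    then show ?thesis using HuI by blast
  qed
  have PT'P: "P (T' (P x)) = T' (P x)" for x by (rule Pid[OF Tinv[OF PHu]])
  have PT's0: "P (T's (h - P h)) = 0" for h
  proof (rule Pchar[OF Hu0])
    show "\<forall>m\<in>Hu. cinner (T's (h - P h) - 0) m = 0"
      by (simp add: T's_def cadjoint_eq2[OF T'b] Porth Tinv)
  qed
  have PT's: "P (T's h) = P (T's (P h))" for h
    using PT's0[of h] by (simp add: bcl_diff[OF T'sb] bcl_diff[OF Pb])
  have invG: "inv (cadjoint T \<circ> T) = inv G" by (simp add: G_def)
  define nA where "nA x = (norm (P (T's (P x))))\<^sup>2" for x
  define nB where "nB x = (norm (T' (P x)))\<^sup>2" for x
  have Aapp: "(P \<circ> T' \<circ> P \<circ> cadjoint T' \<circ> P) h = P (T' (P (T's (P h))))" for h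
    by (simp add: T's_def)
  have Aeq: "P (T' (P (T's (P h)))) = T' (P (T's h))" for h
    by (simp add: PT'P PT's[symmetric])
  have Bapp: "(P \<circ> inv (cadjoint T \<circ> T) \<circ> P) h = P (inv G (P h))" for h
    by (simp add: invG)
  have PP: "cinner (P z) z = cinner (P z) (P z)" for z
    using Psa[of "P z" z] by (simp add: Pidem)
  have cA: "cinner (P (T' (P (T's (P x))))) x = complex_of_real (nA x)" for x
  proof -
    have "cinner (P (T' (P (T's (P x))))) x = cinner (T' (P (T's (P x)))) (P x)" by (rule Psa)
    also have "\<dots> = cinner (P (T's (P x))) (T's (P x))" by (simp add: cadjoint_eq[OF T'b] T's_def)
    also have "\<dots> = cinner (P (T's (P x))) (P (T's (P x)))" by (rule PP)
    finally show ?thesis by (simp add: cinner_self nA_def)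
  qed
  have cB: "cinner (P (inv G (P x))) x = complex_of_real (nB x)" for x
  proof -
    have "cinner (P (inv G (P x))) x = cinner (inv G (P x)) (P x)" by (rule Psa)
    also have "\<dots> = cinner (T's (T' (P x))) (P x)" by (simp add: T'sT')
    also have "\<dots> = cinner (T' (P x)) (T' (P x))" by (simp add: T's_def cadjoint_eq2[OF T'b])
    finally show ?thesis by (simp add: cinner_self nB_def)
  qed
  define Dprop where "Dprop \<longleftrightarrow> (\<forall>x. nA x \<le> nB x)"
  have seq1eq: "((T' ^^ (k+1)) \<circ> inv (C k) \<circ> (cadjoint T' ^^ (k+1))) h = T' (Q k (T's h))" for k h
  proof -
    have "(cadjoint T' ^^ (k+1)) h = (T's ^^ k) (T's h)" by (simp add: T's_def funpow_swap1)
    then show ?thesis by (simp add: Q_def Vadj)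
  qed
  have part1: "(\<lambda>k. ((T' ^^ (k+1)) \<circ> inv (C k) \<circ> (cadjoint T' ^^ (k+1))) h)
                  \<longlonglongrightarrow> (P \<circ> T' \<circ> P \<circ> cadjoint T' \<circ> P) h" for h
  proof -
    have "(\<lambda>k. T' (Q k (T's h))) \<longlonglongrightarrow> T' (P (T's h))" by (rule bcl_continuous[OF T'b PQ])
    then show ?thesis by (simp only: seq1eq Aapp Aeq)
  qed
  have Ab: "bounded_clinear (P \<circ> T' \<circ> P \<circ> cadjoint T' \<circ> P)"
    by (intro bcl_comp Pb T'b bcl_cadjoint)
  have Apos: "positive_op (P \<circ> T' \<circ> P \<circ> cadjoint T' \<circ> P)"
    unfolding positive_op_def by (simp only: Aapp cA complex_of_real_nonneg_iff' nA_def zero_le_power2 simp_thms)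
  have seq2eq: "((T' ^^ k) \<circ> inv (C k) \<circ> C (k+1) \<circ> inv (C k) \<circ> (cadjoint T' ^^ k)) h
      = Q k (inv G (Q k h))" for k h
  proof -
    have C1: "C (Suc k) u = (T's ^^ k) (inv G ((T' ^^ k) u))" for u
    proof -
      have "C (Suc k) u = (T's ^^ (Suc k)) ((T' ^^ (Suc k)) u)" by (simp only: Ck Vadj comp_apply)
      also have "\<dots> = (T's ^^ k) (T's (T' ((T' ^^ k) u)))" by (simp add: funpow_swap1)
      finally show ?thesis by (simp add: T'sT')
    qed
    show ?thesis by (simp add: Q_def Vadj C1 T's_def)
  qed
  have part2: "(\<lambda>k. ((T' ^^ k) \<circ> inv (C k) \<circ> C (k+1) \<circ> inv (C k) \<circ> (cadjoint T' ^^ k)) h)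
                  \<longlonglongrightarrow> (P \<circ> inv (cadjoint T \<circ> T) \<circ> P) h" for h
  proof -
    have l1: "(\<lambda>k. Q k (inv G (P h))) \<longlonglongrightarrow> P (inv G (P h))" by (rule PQ)
    have "(\<lambda>k. inv G (Q k h)) \<longlonglongrightarrow> inv G (P h)" by (rule bcl_continuous[OF Ib PQ])
    then have "(\<lambda>k. inv G (Q k h) - inv G (P h)) \<longlonglongrightarrow> 0" by (rule LIM_zero)
    then have g0: "(\<lambda>k. norm (inv G (Q k h) - inv G (P h))) \<longlonglongrightarrow> 0" by (rule tendsto_norm_zero)
    have "(\<lambda>k. Q k (inv G (Q k h) - inv G (P h))) \<longlonglongrightarrow> 0"
      by (rule Lim_null_comparison[OF _ g0]) (simp add: Qnorm)
    from tendsto_add[OF l1 this]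
    have "(\<lambda>k. Q k (inv G (P h)) + Q k (inv G (Q k h) - inv G (P h))) \<longlonglongrightarrow> P (inv G (P h))" by simp
    then have "(\<lambda>k. Q k (inv G (Q k h))) \<longlonglongrightarrow> P (inv G (P h))"
      by (simp add: bcl_diff[OF Qb])
    then show ?thesis by (simp only: seq2eq Bapp)
  qed
  have Bb: "bounded_clinear (P \<circ> inv (cadjoint T \<circ> T) \<circ> P)"
    unfolding invG by (intro bcl_comp Pb Ib)
  have Bpos: "positive_op (P \<circ> inv (cadjoint T \<circ> T) \<circ> P)"
    unfolding positive_op_def by (simp only: Bapp cB complex_of_real_nonneg_iff' nB_def zero_le_power2 simp_thms)
  have opleq: "op_le (P \<circ> T' \<circ> P \<circ> cadjoint T' \<circ> P) (P \<circ> inv (cadjoint T \<circ> T) \<circ> P) \<longleftrightarrow> Dprop"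
  proof -
    have eq: "cinner ((P \<circ> inv (cadjoint T \<circ> T) \<circ> P) x - (P \<circ> T' \<circ> P \<circ> cadjoint T' \<circ> P) x) x
        = complex_of_real (nB x - nA x)" for x
      by (simp only: Aapp Bapp cinner_diff_left cA cB of_real_diff)
    have "op_le (P \<circ> T' \<circ> P \<circ> cadjoint T' \<circ> P) (P \<circ> inv (cadjoint T \<circ> T) \<circ> P)
        \<longleftrightarrow> (\<forall>x. 0 \<le> complex_of_real (nB x - nA x))"
      unfolding op_le_def positive_op_def by (simp only: eq)
    also have "\<dots> \<longleftrightarrow> Dprop" by (simp only: complex_of_real_nonneg_iff' Dprop_def diff_ge_0_iff_ge)
    finally show ?thesis .
  qed
  have iveq: "positive_op (P \<circ> (\<lambda>h. inv (cadjoint T \<circ> T) h - (T' \<circ> P \<circ> cadjoint T') h) \<circ> P) \<longleftrightarrow> Dprop"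
  proof -
    have "cinner ((P \<circ> (\<lambda>h. inv (cadjoint T \<circ> T) h - (T' \<circ> P \<circ> cadjoint T') h) \<circ> P) x) x
        = complex_of_real (nB x - nA x)" for x
    proof -
      have "cinner ((P \<circ> (\<lambda>h. inv (cadjoint T \<circ> T) h - (T' \<circ> P \<circ> cadjoint T') h) \<circ> P) x) x
          = cinner (P (inv G (P x))) x - cinner (P (T' (P (T's (P x))))) x"
        by (simp add: invG bcl_diff[OF Pb] cinner_diff_left T's_def)
      then show ?thesis by (simp only: cA cB of_real_diff)
    qed
    then have "positive_op (P \<circ> (\<lambda>h. inv (cadjoint T \<circ> T) h - (T' \<circ> P \<circ> cadjoint T') h) \<circ> P)
        \<longleftrightarrow> (\<forall>x. 0 \<le> complex_of_real (nB x - nA x))"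
      unfolding positive_op_def by (simp only:)
    also have "\<dots> \<longleftrightarrow> Dprop" by (simp only: complex_of_real_nonneg_iff' Dprop_def diff_ge_0_iff_ge)
    finally show ?thesis .
  qed
  define S0 where "S0 x = (if x \<in> Hu then P (T's x) else 0)" for x
  have adj_on: "adjoint_on Hu T' = S0"
    unfolding adjoint_on_def
  proof (rule the_equality)
    show "(\<forall>x\<in>Hu. S0 x \<in> Hu) \<and> (\<forall>x. x \<notin> Hu \<longrightarrow> S0 x = 0) \<and>
          (\<forall>x\<in>Hu. \<forall>y\<in>Hu. cinner (T' x) y = cinner x (S0 y))"
    proof (intro conjI ballI allI impI)
      fix x assume "x \<in> Hu" then show "S0 x \<in> Hu" by (simp add: S0_def PHu)
    next
      fix x assume "x \<notin> Hu" then show "S0 x = 0" by (simp add: S0_def)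
    next
      fix x y assume xy: "x \<in> Hu" "y \<in> Hu"
      have "cinner x (S0 y) = cinner x (P (T's y))" using xy by (simp add: S0_def)
      also have "\<dots> = cinner (P x) (T's y)" by (simp add: Psa)
      also have "\<dots> = cinner (T' x) y" using xy by (simp add: Pid T's_def cadjoint_eq[OF T'b])
      finally show "cinner (T' x) y = cinner x (S0 y)" by simp
    qed
    fix S assume S: "(\<forall>x\<in>Hu. S x \<in> Hu) \<and> (\<forall>x. x \<notin> Hu \<longrightarrow> S x = 0) \<and>
          (\<forall>x\<in>Hu. \<forall>y\<in>Hu. cinner (T' x) y = cinner x (S y))"
    show "S = S0"
    proof
      fix y show "S y = S0 y"
      proof (cases "y \<in> Hu")
        case False then show ?thesis using S by (simp add: S0_def)
      next
        case True
        have S0y: "S0 y = P (T's y)" using True by (simp add: S0_def)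
        define d where "d = S y - S0 y"
        have dHu: "d \<in> Hu" unfolding d_def S0y by (rule Hu_diff) (use S True PHu in auto)
        have "cinner d (S y) = cinner (T' d) y" using S True dHu by simp
        also have "\<dots> = cinner d (S0 y)"
          using dHu True by (simp add: S0y Psa[symmetric] Pid T's_def cadjoint_eq[OF T'b])
        finally have "cinner d d = 0" by (simp add: d_def cinner_diff_right)
        then show ?thesis by (simp add: d_def)
      qed
    qed
  qed
  have hypo_eq: "hyponormal_on Hu T' \<longleftrightarrow> Dprop"
  proof -
    have key: "cinner (S0 (T' x) - T' (S0 x)) x
        = complex_of_real ((norm (T' x))\<^sup>2 - (norm (P (T's x)))\<^sup>2)" if xh: "x \<in> Hu" for x
    proof -
      have e1: "cinner (S0 (T' x)) x = complex_of_real ((norm (T' x))\<^sup>2)"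
      proof -
        have "cinner (S0 (T' x)) x = cinner (P (T's (T' x))) x" using Tinv[OF xh] by (simp add: S0_def)
        also have "\<dots> = cinner (T's (T' x)) x" by (simp add: Psa Pid[OF xh])
        also have "\<dots> = cinner (T' x) (T' x)" by (simp add: T's_def cadjoint_eq2[OF T'b])
        finally show ?thesis by (simp add: cinner_self)
      qed
      have e2: "cinner (T' (S0 x)) x = complex_of_real ((norm (P (T's x)))\<^sup>2)"
      proof -
        have "cinner (T' (S0 x)) x = cinner (T' (P (T's x))) x" using xh by (simp add: S0_def)
        also have "\<dots> = cinner (P (T's x)) (T's x)" by (simp add: T's_def cadjoint_eq[OF T'b])
        also have "\<dots> = cinner (P (T's x)) (P (T's x))" by (rule PP)
        finally show ?thesis by (simp add: cinner_self)
      qed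
      show ?thesis by (simp only: cinner_diff_left e1 e2 of_real_diff)
    qed
    have "hyponormal_on Hu T' \<longleftrightarrow> (\<forall>x\<in>Hu. (norm (P (T's x)))\<^sup>2 \<le> (norm (T' x))\<^sup>2)"
    proof -
      have pw: "(0 \<le> cinner (S0 (T' x) - T' (S0 x)) x) \<longleftrightarrow> ((norm (P (T's x)))\<^sup>2 \<le> (norm (T' x))\<^sup>2)"
        if xh: "x \<in> Hu" for x
        by (simp only: key[OF xh] complex_of_real_nonneg_iff' diff_ge_0_iff_ge)
      show ?thesis unfolding hyponormal_on_def adj_on using pw by blast
    qed
    also have "\<dots> \<longleftrightarrow> Dprop"
    proof
      assume H: "\<forall>x\<in>Hu. (norm (P (T's x)))\<^sup>2 \<le> (norm (T' x))\<^sup>2"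
      show Dprop unfolding Dprop_def nA_def nB_def using H PHu by blast
    next
      assume D: Dprop
      show "\<forall>x\<in>Hu. (norm (P (T's x)))\<^sup>2 \<le> (norm (T' x))\<^sup>2"
      proof
        fix x assume "x \<in> Hu"
        then show "(norm (P (T's x)))\<^sup>2 \<le> (norm (T' x))\<^sup>2"
          using D unfolding Dprop_def nA_def nB_def by (metis Pid)
      qed
    qed
    finally show ?thesis .
  qed
  have Rfacts: "bounded_clinear (op_sqrt (C k)) \<and> (\<forall>x. op_sqrt (C k) (op_sqrt (C k) x) = C k x)
      \<and> cadjoint (op_sqrt (C k)) = op_sqrt (C k) \<and> bounded_clinear (inv (op_sqrt (C k)))
      \<and> cadjoint (inv (op_sqrt (C k))) = inv (op_sqrt (C k))
      \<and> (\<forall>x. op_sqrt (C k) (inv (op_sqrt (C k)) x) = x)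
      \<and> (\<forall>w. inv (op_sqrt (C k)) (inv (op_sqrt (C k)) w) = inv (C k) w)" for k
  proof -
    obtain b where b: "b > 0" "\<And>x. b * norm x \<le> norm ((T' ^^ k) x)" using Vbb[of k] by blast
    note R2 = op_sqrt_props2[OF Vb b, folded Ck]
    show ?thesis using R2 by blast
  qed
  have lhs_eq: "(norm ((cadjoint (op_sqrt (C k) \<circ> T' \<circ> inv (op_sqrt (C k))) \<circ>
          inv (op_sqrt (C k)) \<circ> (cadjoint T' ^^ k)) h))\<^sup>2
      = Re (cinner (((T' ^^ (k+1)) \<circ> inv (C k) \<circ> (cadjoint T' ^^ (k+1))) h) h)" for k h
  proof -
    let ?R = "op_sqrt (C k)"
    have Rb: "bounded_clinear ?R" and RIb: "bounded_clinear (inv ?R)" and Rsa: "cadjoint ?R = ?R"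
      and RIsa: "cadjoint (inv ?R) = inv ?R" and RI: "\<And>x. ?R (inv ?R x) = x"
      and IIR: "\<And>w. inv ?R (inv ?R w) = inv (C k) w"
      using Rfacts[of k] by auto
    have adj: "cadjoint (?R \<circ> T' \<circ> inv ?R) = inv ?R \<circ> (T's \<circ> ?R)"
      by (simp add: cadjoint_comp[OF bcl_comp[OF Rb T'b] RIb] cadjoint_comp[OF Rb T'b] RIsa Rsa T's_def)
    define w where "w = T's ((T's ^^ k) h)"
    have w: "(cadjoint T' ^^ (k+1)) h = w" by (simp add: w_def T's_def)
    have "(cadjoint (?R \<circ> T' \<circ> inv ?R) \<circ> inv ?R \<circ> (cadjoint T' ^^ k)) h = inv ?R w"
      by (simp add: adj RI w_def T's_def)
    then have "(norm ((cadjoint (?R \<circ> T' \<circ> inv ?R) \<circ> inv ?R \<circ> (cadjoint T' ^^ k)) h))\<^sup>2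
        = Re (cinner (inv ?R w) (inv ?R w))" by (simp add: cinner_self)
    also have "cinner (inv ?R w) (inv ?R w) = cinner (inv ?R (inv ?R w)) w"
      by (rule cinner_selfadj[OF RIb RIsa, symmetric])
    also have "\<dots> = cinner (inv (C k) w) w" by (simp add: IIR)
    also have "\<dots> = cinner (((T' ^^ (k+1)) \<circ> inv (C k) \<circ> (cadjoint T' ^^ (k+1))) h) h"
    proof -
      have "cinner (((T' ^^ (k+1)) \<circ> inv (C k) \<circ> (cadjoint T' ^^ (k+1))) h) h
          = cinner ((T' ^^ (k+1)) (inv (C k) w)) h" by (simp only: comp_apply w)
      also have "\<dots> = cinner (inv (C k) w) (cadjoint (T' ^^ (k+1)) h)" by (rule cadjoint_eq[OF Vb])
      also have "cadjoint (T' ^^ (k+1)) h = w" by (simp only: Vadj w[symmetric] T's_def)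
      finally show ?thesis by simp
    qed
    finally show ?thesis .
  qed
  have rhs_eq: "(norm ((op_sqrt (C k) \<circ> T' \<circ> inv (op_sqrt (C k)) \<circ>
          inv (op_sqrt (C k)) \<circ> (cadjoint T' ^^ k)) h))\<^sup>2
      = Re (cinner (((T' ^^ k) \<circ> inv (C k) \<circ> C (k+1) \<circ> inv (C k) \<circ> (cadjoint T' ^^ k)) h) h)" for k h
  proof -
    let ?R = "op_sqrt (C k)"
    have Rb: "bounded_clinear ?R" and Rsa: "cadjoint ?R = ?R" and RR: "\<And>x. ?R (?R x) = C k x"
      and IIR: "\<And>w. inv ?R (inv ?R w) = inv (C k) w"
      using Rfacts[of k] by auto
    define u where "u = inv (C k) ((cadjoint T' ^^ k) h)"
    have "(?R \<circ> T' \<circ> inv ?R \<circ> inv ?R \<circ> (cadjoint T' ^^ k)) h = ?R (T' u)"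
      by (simp add: IIR u_def)
    then have "(norm ((?R \<circ> T' \<circ> inv ?R \<circ> inv ?R \<circ> (cadjoint T' ^^ k)) h))\<^sup>2
        = Re (cinner (?R (T' u)) (?R (T' u)))" by (simp add: cinner_self)
    also have "cinner (?R (T' u)) (?R (T' u)) = cinner (?R (?R (T' u))) (T' u)"
      by (rule cinner_selfadj[OF Rb Rsa, symmetric])
    also have "\<dots> = cinner (C k (T' u)) (T' u)" by (simp add: RR)
    also have "\<dots> = cinner ((T' ^^ (k+1)) u) ((T' ^^ (k+1)) u)"
      by (simp add: Ck cadjoint_eq2[OF Vb] funpow_swap1)
    also have "\<dots> = cinner (C (k+1) u) u"
      by (simp only: Ck comp_apply cadjoint_eq2[OF Vb])
    also have "\<dots> = cinner (C (k+1) u) (inv (C k) ((cadjoint T' ^^ k) h))" by (simp add: u_def)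
    also have "\<dots> = cinner (inv (C k) (C (k+1) u)) ((cadjoint T' ^^ k) h)"
      by (rule cinner_selfadj[OF CIb CIsa, symmetric])
    also have "(cadjoint T' ^^ k) h = cadjoint (T' ^^ k) h" by (simp add: Vadj T's_def)
    also have "cinner (inv (C k) (C (k+1) u)) (cadjoint (T' ^^ k) h)
        = cinner ((T' ^^ k) (inv (C k) (C (k+1) u))) h" by (rule cadjoint_eq[OF Vb, symmetric])
    also have "\<dots> = cinner (((T' ^^ k) \<circ> inv (C k) \<circ> C (k+1) \<circ> inv (C k) \<circ> (cadjoint T' ^^ k)) h) h"
      by (simp add: u_def)
    finally show ?thesis .
  qed
  have limA: "lim (\<lambda>k. (norm ((cadjoint (op_sqrt (C k) \<circ> T' \<circ> inv (op_sqrt (C k))) \<circ>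
          inv (op_sqrt (C k)) \<circ> (cadjoint T' ^^ k)) h))\<^sup>2) = nA h" for h
  proof -
    have "(\<lambda>k. inner (((T' ^^ (k+1)) \<circ> inv (C k) \<circ> (cadjoint T' ^^ (k+1))) h) h)
        \<longlonglongrightarrow> inner ((P \<circ> T' \<circ> P \<circ> cadjoint T' \<circ> P) h) h"
      by (intro tendsto_inner part1 tendsto_const)
    moreover have "inner ((P \<circ> T' \<circ> P \<circ> cadjoint T' \<circ> P) h) h = nA h"
      using arg_cong[OF cA[of h], of Re] by (simp only: Aapp Re_cinner Re_complex_of_real)
    ultimately show ?thesis by (simp only: lhs_eq Re_cinner limI)
  qed
  have limB: "lim (\<lambda>k. (norm ((op_sqrt (C k) \<circ> T' \<circ> inv (op_sqrt (C k)) \<circ>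
          inv (op_sqrt (C k)) \<circ> (cadjoint T' ^^ k)) h))\<^sup>2) = nB h" for h
  proof -
    have "(\<lambda>k. inner (((T' ^^ k) \<circ> inv (C k) \<circ> C (k+1) \<circ> inv (C k) \<circ> (cadjoint T' ^^ k)) h) h)
        \<longlonglongrightarrow> inner ((P \<circ> inv (cadjoint T \<circ> T) \<circ> P) h) h"
      by (intro tendsto_inner part2 tendsto_const)
    moreover have "inner ((P \<circ> inv (cadjoint T \<circ> T) \<circ> P) h) h = nB h"
      using arg_cong[OF cB[of h], of Re] by (simp only: Bapp Re_cinner Re_complex_of_real)
    ultimately show ?thesis by (simp only: rhs_eq Re_cinner limI)
  qed
  have iiieq: "(\<forall>h. lim (\<lambda>k. (norm ((cadjoint (op_sqrt (C k) \<circ> T' \<circ> inv (op_sqrt (C k))) \<circ>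
                                  inv (op_sqrt (C k)) \<circ> (cadjoint T' ^^ k)) h))\<^sup>2)
              \<le> lim (\<lambda>k. (norm ((op_sqrt (C k) \<circ> T' \<circ> inv (op_sqrt (C k)) \<circ>
                                  inv (op_sqrt (C k)) \<circ> (cadjoint T' ^^ k)) h))\<^sup>2)) \<longleftrightarrow> Dprop"
    by (simp only: limA limB Dprop_def)
  show ?thesis
    using part1 Ab Apos part2 Bb Bpos opleq iveq hypo_eq iiieq by blast
qed

end
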